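(* Let $(X_j,X_l,Y)$ be a random vector with $X_j,X_l$ real-valued and $Y\in\{1,\dots,K\}$, and let $(X_{i,j},X_{i,l},Y_i)$, $i=1,\dots,n$, be independent and identically distributed copies of it; write $\mathbf{Y}=(Y_1,\dots,Y_n)$. For $k\in\{1,\dots,K\}$ let $(\tilde X_j,\tilde X_l,\tilde Y)$ be an independent copy of $(X_j,X_l,Y)$ and define the conditional Kendall's $\tau$ $$\tau_k(X_j,X_l)=2\,\mathbb{P}\big((X_j-\tilde X_j)(X_l-\tilde X_l)>0\mid Y=k,\tilde Y=k\big)-1,$$ let $n_k=\sum_{i=1}^n\mathbf{1}\{Y_i=k\}$, $\hat\pi_k=n_k/n$, and (whenever $n_k\ge 2$) $$\hat\tau_k(X_j,X_l)=\frac{4}{n_k(n_k-1)}\sum_{1\le i<t\le n}\mathbf{1}\{(X_{i,j}-X_{t,j})(X_{i,l}-X_{t,l})>0,\ Y_i=k,\ Y_t=k\}-1.$$ Then (i) $\mathbb{E}\big(\hat\pi_k\hat\tau_k(X_j,X_l)\mid \mathbf{Y}\big)=\hat\pi_k\tau_k(X_j,X_l)$; (ii) for all $\epsilon>0$, $\mathbb{P}\big(\hat\pi_k|\hat\tau_k(X_j,X_l)-\tau_k(X_j,X_l)|>\epsilon\mid \mathbf{Y}\big)\le 2\exp(-n\epsilon^2/8)$.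
   Context: No moment or distributional assumptions are imposed on $(X_j,X_l)$. *)

theory Defs
  imports "HOL-Probability.Probability"
begin

definition obs_space :: "(real \<times> real \<times> nat) measure" where
  "obs_space = borel \<Otimes>\<^sub>M borel \<Otimes>\<^sub>M count_space UNIV"

definition trip :: "('a \<Rightarrow> real) \<Rightarrow> ('a \<Rightarrow> real) \<Rightarrow> ('a \<Rightarrow> nat) \<Rightarrow> 'a \<Rightarrow> real \<times> real \<times> nat" where
  "trip A B C = (\<lambda>\<omega>. (A \<omega>, B \<omega>, C \<omega>))"

text \<open>Conditional Kendall tau of class k, computed from the law mu of (X_j,X_l,Y):
  an independent copy is realised by the product measure mu x mu, and the conditional
  probability given Y = k, Y~ = k is the ratio of the two product measures.\<close>
definition cond_tau :: "(real \<times> real \<times> nat) measure \<Rightarrow> nat \<Rightarrow> real" where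
  "cond_tau mu k =
     2 * (measure (mu \<Otimes>\<^sub>M mu)
            {(u, v). (fst u - fst v) * (fst (snd u) - fst (snd v)) > 0 \<and> snd (snd u) = k \<and> snd (snd v) = k}
          / measure (mu \<Otimes>\<^sub>M mu) {(u, v). snd (snd u) = k \<and> snd (snd v) = k}) - 1"

definition n_k :: "nat \<Rightarrow> (nat \<Rightarrow> 'a \<Rightarrow> nat) \<Rightarrow> nat \<Rightarrow> 'a \<Rightarrow> nat" where
  "n_k n Y k \<omega> = card {i \<in> {1..n}. Y i \<omega> = k}"

definition pi_hat :: "nat \<Rightarrow> (nat \<Rightarrow> 'a \<Rightarrow> nat) \<Rightarrow> nat \<Rightarrow> 'a \<Rightarrow> real" where
  "pi_hat n Y k \<omega> = real (n_k n Y k \<omega>) / real n"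

definition tau_hat :: "nat \<Rightarrow> (nat \<Rightarrow> 'a \<Rightarrow> real) \<Rightarrow> (nat \<Rightarrow> 'a \<Rightarrow> real) \<Rightarrow> (nat \<Rightarrow> 'a \<Rightarrow> nat)
    \<Rightarrow> nat \<Rightarrow> 'a \<Rightarrow> real" where
  "tau_hat n Xj Xl Y k \<omega> =
     4 / (real (n_k n Y k \<omega>) * (real (n_k n Y k \<omega>) - 1)) *
       (\<Sum>i\<in>{1..n}. \<Sum>t\<in>{i<..n}.
          (if (Xj i \<omega> - Xj t \<omega>) * (Xl i \<omega> - Xl t \<omega>) > 0 \<and> Y i \<omega> = k \<and> Y t \<omega> = k
           then 1 else 0)) - 1"

end

theory Submission
  imports Defs
begin


lemma integral_uniform:
  fixes f :: "'a \<Rightarrow> real"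
  assumes "finite_measure M" "A \<in> sets M" "measure M A > 0" "f \<in> borel_measurable M"
  shows "integral\<^sup>L (uniform_measure M A) f = integral\<^sup>L M (\<lambda>x. indicator A x * f x) / measure M A"
proof -
  interpret finite_measure M by fact
  have e: "emeasure M A = ennreal (measure M A)" by (simp add: emeasure_eq_measure)
  have "uniform_measure M A = density M (\<lambda>x. ennreal (indicator A x / measure M A))"
    unfolding uniform_measure_def e
  proof (intro density_cong)
    show "(\<lambda>x. indicator A x / ennreal (measure M A)) \<in> borel_measurable M" using assms(2) by measurable
  next
    show "AE x in M. indicator A x / ennreal (measure M A) = ennreal (indicator A x / measure M A)"
      using assms(3) by (auto simp: indicator_def divide_ennreal[symmetric])
  qed (use assms(2) in measurable)
  then have "integral\<^sup>L (uniform_measure M A) f = integral\<^sup>L M (\<lambda>x. (indicator A x / measure M A) *\<^sub>R f x)"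
    apply (simp only: )
    apply (rule integral_density)
    using assms(2,4) by auto
  also have "\<dots> = integral\<^sup>L M (\<lambda>x. indicator A x * f x) / measure M A"
    by simp
  finally show ?thesis .
qed

lemma group_factor:
  fixes T :: "nat \<Rightarrow> 'a \<Rightarrow> 'b" and g :: "nat \<times> nat \<Rightarrow> 'b \<times> 'b \<Rightarrow> real" and e :: "nat \<Rightarrow> 'b \<Rightarrow> real"
  assumes P: "prob_space M" and ind: "prob_space.indep_vars M (\<lambda>_. N) T I"
   and Q: "finite Q" "Q \<subseteq> I \<times> I" "\<forall>q\<in>Q. fst q \<noteq> snd q"
   and Qd: "\<forall>q\<in>Q. \<forall>q'\<in>Q. q \<noteq> q' \<longrightarrow> {fst q, snd q} \<inter> {fst q', snd q'} = {}"
   and R: "finite R" "R \<subseteq> I" "\<forall>q\<in>Q. fst q \<notin> R \<and> snd q \<notin> R"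
   and gm: "\<forall>q\<in>Q. g q \<in> borel_measurable (N \<Otimes>\<^sub>M N)" and gb: "\<forall>q\<in>Q. \<forall>z. \<bar>g q z\<bar> \<le> B"
   and em: "\<forall>r\<in>R. e r \<in> borel_measurable N" and eb: "\<forall>r\<in>R. \<forall>z. \<bar>e r z\<bar> \<le> B"
  shows "(\<integral>\<omega>. (\<Prod>q\<in>Q. g q (T (fst q) \<omega>, T (snd q) \<omega>)) * (\<Prod>r\<in>R. e r (T r \<omega>)) \<partial>M)
        = (\<Prod>q\<in>Q. \<integral>\<omega>. g q (T (fst q) \<omega>, T (snd q) \<omega>) \<partial>M) * (\<Prod>r\<in>R. \<integral>\<omega>. e r (T r \<omega>) \<partial>M)"
proof -
  interpret prob_space M by fact
  define L :: "(nat \<times> nat + nat) set" where "L = Inl ` Q \<union> Inr ` R"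
  define K :: "nat \<times> nat + nat \<Rightarrow> nat set" where "K j = (case j of Inl q \<Rightarrow> {fst q, snd q} | Inr r \<Rightarrow> {r})" for j
  define F where "F j f = (case j of Inl q \<Rightarrow> g q (f (fst q), f (snd q)) | Inr r \<Rightarrow> e r (f r))"
    for j and f :: "nat \<Rightarrow> 'b"
  have Tm: "T i \<in> measurable M N" if "i \<in> I" for i
    using ind that unfolding indep_vars_def by auto
  have KI: "K j \<subseteq> I" if "j \<in> L" for j
    using that Q R unfolding L_def K_def by auto
  have dj: "disjoint_family_on K L"
    unfolding disjoint_family_on_def L_def K_def using Qd R(3) by fastforce
  have ind2: "indep_vars (\<lambda>j. PiM (K j) (\<lambda>_. N)) (\<lambda>j \<omega>. restrict (\<lambda>i. T i \<omega>) (K j)) L"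
    by (rule indep_vars_restrict[OF ind KI dj])
  have Fm: "F j \<in> borel_measurable (PiM (K j) (\<lambda>_. N))" if "j \<in> L" for j
  proof (cases j)
    case (Inl q)
    with that have q: "q \<in> Q" unfolding L_def by auto
    have [measurable]: "g q \<in> borel_measurable (N \<Otimes>\<^sub>M N)" using gm q by auto
    have "(\<lambda>f. g q (f (fst q), f (snd q))) \<in> borel_measurable (PiM {fst q, snd q} (\<lambda>_. N))"
      by measurable
    moreover have "F j = (\<lambda>f. g q (f (fst q), f (snd q)))" using Inl by (simp add: F_def fun_eq_iff)
    ultimately show ?thesis using Inl by (simp add: K_def)
  next
    case (Inr r)
    with that have r: "r \<in> R" unfolding L_def by auto
    have [measurable]: "e r \<in> borel_measurable N" using em r by auto
    have "(\<lambda>f. e r (f r)) \<in> borel_measurable (PiM {r} (\<lambda>_. N))"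
      by measurable
    moreover have "F j = (\<lambda>f. e r (f r))" using Inr by (simp add: F_def fun_eq_iff)
    ultimately show ?thesis using Inr by (simp add: K_def)
  qed
  have ind3: "indep_vars (\<lambda>_. borel) (\<lambda>j \<omega>. F j (restrict (\<lambda>i. T i \<omega>) (K j))) L"
    by (rule indep_vars_compose2[OF ind2 Fm])
  have Fb: "\<bar>F j f\<bar> \<le> B" if "j \<in> L" for j f
    using that gb eb unfolding L_def F_def by auto
  have fL: "finite L" using Q R unfolding L_def by auto
  have intg: "integrable M (\<lambda>\<omega>. F j (restrict (\<lambda>i. T i \<omega>) (K j)))" if "j \<in> L" for j
  proof (rule integrable_const_bound[where B=B])
    show "AE x in M. norm (F j (restrict (\<lambda>i. T i x) (K j))) \<le> B" using Fb[OF that] by auto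
    show "(\<lambda>\<omega>. F j (restrict (\<lambda>i. T i \<omega>) (K j))) \<in> borel_measurable M"
      using ind3 that unfolding indep_vars_def by auto
  qed
  have main: "(\<integral>\<omega>. (\<Prod>j\<in>L. F j (restrict (\<lambda>i. T i \<omega>) (K j))) \<partial>M) =
      (\<Prod>j\<in>L. \<integral>\<omega>. F j (restrict (\<lambda>i. T i \<omega>) (K j)) \<partial>M)"
    by (rule indep_vars_lebesgue_integral[OF fL ind3 intg])
  have split: "(\<Prod>j\<in>L. H j) = (\<Prod>q\<in>Q. H (Inl q)) * (\<Prod>r\<in>R. H (Inr r))" for H :: "nat \<times> nat + nat \<Rightarrow> real"
    unfolding L_def using Q R
    by (subst prod.union_disjoint) (auto simp: prod.reindex)
  have e1: "(\<Prod>j\<in>L. F j (restrict (\<lambda>i. T i \<omega>) (K j))) =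
      (\<Prod>q\<in>Q. g q (T (fst q) \<omega>, T (snd q) \<omega>)) * (\<Prod>r\<in>R. e r (T r \<omega>))" for \<omega>
    unfolding split by (simp add: F_def K_def)
  have e2: "(\<Prod>j\<in>L. \<integral>\<omega>. F j (restrict (\<lambda>i. T i \<omega>) (K j)) \<partial>M) =
      (\<Prod>q\<in>Q. \<integral>\<omega>. g q (T (fst q) \<omega>, T (snd q) \<omega>) \<partial>M) * (\<Prod>r\<in>R. \<integral>\<omega>. e r (T r \<omega>) \<partial>M)"
    unfolding split by (simp add: F_def K_def)
  show ?thesis using main unfolding e1 e2 .
qed

lemma pair_integral:
  fixes T :: "nat \<Rightarrow> 'a \<Rightarrow> 'b" and g :: "'b \<times> 'b \<Rightarrow> real"
  assumes P: "prob_space M" and ind: "prob_space.indep_vars M (\<lambda>_. N) T I"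
    and ab: "a \<in> I" "b \<in> I" "a \<noteq> b"
    and da: "distr M N (T a) = mu" and db: "distr M N (T b) = mu"
    and gm: "g \<in> borel_measurable (N \<Otimes>\<^sub>M N)"
  shows "(\<integral>\<omega>. g (T a \<omega>, T b \<omega>) \<partial>M) = integral\<^sup>L (mu \<Otimes>\<^sub>M mu) g"
proof -
  interpret prob_space M by fact
  have Tm: "T i \<in> measurable M N" if "i \<in> I" for i
    using ind that unfolding indep_vars_def by auto
  have "indep_var (PiM {a} (\<lambda>_. N)) (\<lambda>\<omega>. restrict (\<lambda>i. T i \<omega>) {a}) (PiM {b} (\<lambda>_. N)) (\<lambda>\<omega>. restrict (\<lambda>i. T i \<omega>) {b})"
    using ab by (intro indep_var_restrict[OF ind]) auto
  then have "indep_var N ((\<lambda>f. f a) \<circ> (\<lambda>\<omega>. restrict (\<lambda>i. T i \<omega>) {a})) N ((\<lambda>f. f b) \<circ> (\<lambda>\<omega>. restrict (\<lambda>i. T i \<omega>) {b}))"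
    by (rule indep_var_compose) auto
  moreover have "(\<lambda>f. f a) \<circ> (\<lambda>\<omega>. restrict (\<lambda>i. T i \<omega>) {a}) = T a" "(\<lambda>f. f b) \<circ> (\<lambda>\<omega>. restrict (\<lambda>i. T i \<omega>) {b}) = T b"
    by (auto simp: fun_eq_iff)
  ultimately have iv: "indep_var N (T a) N (T b)" by simp
  have jd: "distr M (N \<Otimes>\<^sub>M N) (\<lambda>x. (T a x, T b x)) = mu \<Otimes>\<^sub>M mu"
    using iv unfolding indep_var_distribution_eq da db by simp
  have Fm: "(\<lambda>x. (T a x, T b x)) \<in> measurable M (N \<Otimes>\<^sub>M N)"
    using Tm ab by (auto intro!: measurable_Pair)
  have "integral\<^sup>L (mu \<Otimes>\<^sub>M mu) g = integral\<^sup>L (distr M (N \<Otimes>\<^sub>M N) (\<lambda>x. (T a x, T b x))) g"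
    by (simp add: jd)
  also have "\<dots> = (\<integral>\<omega>. g (T a \<omega>, T b \<omega>) \<partial>M)"
    by (rule integral_distr[OF Fm gm])
  finally show ?thesis by simp
qed


lemma hoeff_pos:
  fixes U :: "'c measure" and h :: "'c \<Rightarrow> real"
  assumes "prob_space U" "h \<in> borel_measurable U" "\<forall>z. \<bar>h z\<bar> \<le> 1" "l > 0"
  shows "(\<integral>z. exp (l * (h z - integral\<^sup>L U h)) \<partial>U) \<le> exp (l\<^sup>2 / 2)"
proof -
  interpret interval_bounded_random_variable U h "-1" 1
  proof -
    interpret prob_space U by fact
    show "interval_bounded_random_variable U h (-1) 1"
    proof unfold_locales
      show "h \<in> borel_measurable U" by fact
      show "AE x in U. h x \<in> {-1..1}"
        using assms(3) by (intro AE_I2) (simp add: abs_le_iff)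
    qed
  qed
  have nn0: "nn_integral U (\<lambda>x. exp (l * (h x - expectation h))) \<le> ennreal (exp (l\<^sup>2 * (1 - (-1))\<^sup>2 / 8))"
    by (rule Hoeffdings_lemma_nn_integral[OF assms(4)])
  have "l\<^sup>2 * (1 - (-1::real))\<^sup>2 / 8 = l\<^sup>2 / 2" by simp
  with nn0 have nn: "nn_integral U (\<lambda>x. exp (l * (h x - expectation h))) \<le> ennreal (exp (l\<^sup>2 / 2))"
    by simp
  have intg: "integrable U (\<lambda>x. exp (l * (h x - expectation h)))"
  proof (rule integrable_const_bound[where B="exp (l * (1 + \<bar>expectation h\<bar>))"])
    show "AE x in U. norm (exp (l * (h x - expectation h))) \<le> exp (l * (1 + \<bar>expectation h\<bar>))"
    proof (intro AE_I2)
      fix x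
      have "l * (h x - expectation h) \<le> l * (1 + \<bar>expectation h\<bar>)"
      proof (rule mult_left_mono)
        have "h x \<le> 1" using assms(3) by (simp add: abs_le_iff)
        then show "h x - expectation h \<le> 1 + \<bar>expectation h\<bar>" by linarith
      qed (use assms(4) in auto)
      then show "norm (exp (l * (h x - expectation h))) \<le> exp (l * (1 + \<bar>expectation h\<bar>))" by simp
    qed
  qed (use assms(2) in measurable)
  have "nn_integral U (\<lambda>x. exp (l * (h x - expectation h))) = ennreal (integral\<^sup>L U (\<lambda>x. exp (l * (h x - expectation h))))"
    by (rule nn_integral_eq_integral[OF intg]) auto
  with nn show ?thesis by simp
qed

lemma hoeff_cond:
  fixes nu :: "'c measure" and h :: "'c \<Rightarrow> real"
  assumes fm: "finite_measure nu" and A: "A \<in> sets nu" "measure nu A > 0"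
    and hm: "h \<in> borel_measurable nu" and hb: "\<forall>z. \<bar>h z\<bar> \<le> 1"
    and tau: "tau = (\<integral>z. indicator A z * h z \<partial>nu) / measure nu A"
  shows "(\<integral>z. indicator A z * exp (l * (h z - tau)) \<partial>nu) \<le> measure nu A * exp (l\<^sup>2 / 2)"
proof -
  interpret finite_measure nu by fact
  define U where "U = uniform_measure nu A"
  have pU: "prob_space U" unfolding U_def
    using A by (intro prob_space_uniform_measure) (auto simp: emeasure_eq_measure)
  have hU: "h \<in> borel_measurable U" unfolding U_def using hm by simp
  have eU: "integral\<^sup>L U f = (\<integral>z. indicator A z * f z \<partial>nu) / measure nu A" if "f \<in> borel_measurable nu" for f
    unfolding U_def by (rule integral_uniform[OF fm A that])
  have tauU: "integral\<^sup>L U h = tau" using eU[OF hm] tau by simp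
  have key: "(\<integral>z. exp (l * (h z - tau)) \<partial>U) \<le> exp (l\<^sup>2 / 2)"
  proof (cases "l > 0")
    case True
    then show ?thesis using hoeff_pos[OF pU hU hb True] tauU by simp
  next
    case False
    show ?thesis
    proof (cases "l = 0")
      case True
      then show ?thesis using prob_space.prob_space[OF pU] by simp
    next
      case False
      with \<open>\<not> l > 0\<close> have l: "- l > 0" by simp
      have "(\<integral>z. exp ((- l) * ((- h z) - integral\<^sup>L U (\<lambda>z. - h z))) \<partial>U) \<le> exp ((-l)\<^sup>2 / 2)"
        by (rule hoeff_pos[OF pU _ _ l]) (use hU hb in auto)
      moreover have "integral\<^sup>L U (\<lambda>z. - h z) = - tau" using tauU by simp
      moreover have "(-l) * ((- h z) - (- tau)) = l * (h z - tau)" for z by algebra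
      ultimately show ?thesis by simp
    qed
  qed
  have "(\<integral>z. exp (l * (h z - tau)) \<partial>U) = (\<integral>z. indicator A z * exp (l * (h z - tau)) \<partial>nu) / measure nu A"
    by (rule eU) (use hm in measurable)
  with key have "(\<integral>z. indicator A z * exp (l * (h z - tau)) \<partial>nu) / measure nu A \<le> exp (l\<^sup>2 / 2)"
    by simp
  with A(2) show ?thesis by (simp add: divide_le_eq mult.commute)
qed


definition Mc :: "nat \<Rightarrow> nat \<Rightarrow> (nat \<times> nat) set" where
  "Mc m c = {(a, b). a < b \<and> b < m \<and> (a + b) mod m = c}"

lemma mod_cancel:
  fixes x y y' m :: nat
  assumes "y < m" "y' < m" "(x + y) mod m = (x + y') mod m"
  shows "y = y'"
proof -
  have d1: "y = y'" if "y' \<le> y"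
  proof -
    have "m dvd (x + y) - (x + y')" using assms(3) that by (subst mod_eq_dvd_iff_nat[symmetric]) auto
    then have "m dvd y - y'" by simp
    moreover have "y - y' < m" using assms(1) by linarith
    ultimately have "y - y' = 0" using nat_dvd_not_less by blast
    then show ?thesis using that by simp
  qed
  have d2: "y' = y" if "y \<le> y'"
  proof -
    have "m dvd (x + y') - (x + y)" using assms(3) that by (subst mod_eq_dvd_iff_nat[symmetric]) auto
    then have "m dvd y' - y" by simp
    moreover have "y' - y < m" using assms(2) by linarith
    ultimately have "y' - y = 0" using nat_dvd_not_less by blast
    then show ?thesis using that by simp
  qed
  show ?thesis using d1 d2 by linarith
qed

lemma Mc_disj:
  assumes "(a, b) \<in> Mc m c" "(a', b') \<in> Mc m c" "(a, b) \<noteq> (a', b')"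
  shows "{a, b} \<inter> {a', b'} = {}"
proof -
  from assms have h: "a < b" "b < m" "(a + b) mod m = c" "a' < b'" "b' < m" "(a' + b') mod m = c"
    by (auto simp: Mc_def)
  have "a \<noteq> a'"
  proof
    assume "a = a'" then have "b = b'" using h mod_cancel[of b m b' a] by auto
    with \<open>a = a'\<close> assms(3) show False by simp
  qed
  moreover have "b \<noteq> b'"
  proof
    assume "b = b'" then have "a = a'" using h mod_cancel[of a m a' b] by (auto simp: add.commute)
    with \<open>b = b'\<close> assms(3) show False by simp
  qed
  moreover have "a \<noteq> b'"
  proof
    assume e: "a = b'" then have "b = a'" using h mod_cancel[of b m a' a] by (auto simp: add.commute)
    with e h show False by simp
  qed
  moreover have "b \<noteq> a'"
  proof
    assume e: "b = a'" then have "a = b'" using h mod_cancel[of a m b' b] by (auto simp: add.commute)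
    with e h show False by simp
  qed
  ultimately show ?thesis by auto
qed

lemma Mc_card:
  assumes m: "m \<ge> 2" and c: "c < m" and ne: "Mc m c \<noteq> {}"
  shows "m \<le> 4 * card (Mc m c)"
proof -
  define f where "f a = (c + m - a) mod m" for a
  have fm: "f a < m" for a using m by (simp add: f_def)
  have fs: "(a + f a) mod m = c" if "a < m" for a
  proof -
    have "(a + f a) mod m = (a + (c + m - a)) mod m" by (simp add: f_def mod_add_right_eq)
    also have "a + (c + m - a) = c + m" using that by simp
    finally show ?thesis using c by simp
  qed
  have finv: "f (f a) = a" if "a < m" for a
  proof -
    have "(f a + f (f a)) mod m = (f a + a) mod m" using fs[OF fm[of a]] fs[OF that] by (simp add: add.commute)
    then show ?thesis using mod_cancel[OF fm[of "f a"] that] by simp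
  qed
  define A where "A = {a. a < m \<and> a < f a}"
  define B where "B = {a. a < m \<and> f a < a}"
  define F where "F = {a. a < m \<and> f a = a}"
  have Mc_eq: "Mc m c = (\<lambda>a. (a, f a)) ` A"
  proof (intro equalityI subsetI)
    fix p assume p: "p \<in> Mc m c"
    obtain a b where ab: "p = (a, b)" by (cases p)
    with p have h: "a < b" "b < m" "(a + b) mod m = c" by (auto simp: Mc_def)
    have "b = f a" using mod_cancel[OF h(2) fm[of a], of a] h fs[of a] by simp
    with h ab show "p \<in> (\<lambda>a. (a, f a)) ` A" by (auto simp: A_def)
  next
    fix p assume "p \<in> (\<lambda>a. (a, f a)) ` A"
    then obtain a where "p = (a, f a)" "a < m" "a < f a" by (auto simp: A_def)
    then show "p \<in> Mc m c" using fs fm by (auto simp: Mc_def)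
  qed
  have cA: "card (Mc m c) = card A"
    unfolding Mc_eq by (rule card_image) (auto simp: inj_on_def)
  have bij: "bij_betw f A B"
  proof (rule bij_betw_byWitness[where f'=f])
    show "\<forall>a\<in>A. f (f a) = a" using finv by (auto simp: A_def)
    show "\<forall>a\<in>B. f (f a) = a" using finv by (auto simp: B_def)
    show "f ` A \<subseteq> B" using finv fm by (auto simp: A_def B_def)
    show "f ` B \<subseteq> A" using finv fm by (auto simp: A_def B_def)
  qed
  have cB: "card B = card A" using bij_betw_same_card[OF bij] by simp
  have two: "2 * (a2 - a1) = m" if "a1 \<in> F" "a2 \<in> F" "a1 < a2" for a1 a2
  proof -
    have "(a1 + a1) mod m = c" "(a2 + a2) mod m = c" using that fs[of a1] fs[of a2] by (auto simp: F_def)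
    then have "m dvd (a2 + a2) - (a1 + a1)" using that by (subst mod_eq_dvd_iff_nat[symmetric]) auto
    then obtain j where j: "(a2 + a2) - (a1 + a1) = m * j" by (auto simp: dvd_def)
    have "a2 < m" using that by (auto simp: F_def)
    then have "m * j < m * 2" "0 < m * j" using j that by linarith+
    then have "j < 2" "0 < j" by simp_all
    then have "j = 1" by arith
    with j show ?thesis by simp
  qed
  have F1: "card {a \<in> F. 2 * a < m} \<le> 1"
  proof -
    have fin: "finite {a \<in> F. 2 * a < m}" by (auto simp: F_def)
    have "\<forall>x\<in>{a \<in> F. 2 * a < m}. \<forall>y\<in>{a \<in> F. 2 * a < m}. x = y"
    proof (intro ballI, rule ccontr)
      fix x y assume xy: "x \<in> {a \<in> F. 2 * a < m}" "y \<in> {a \<in> F. 2 * a < m}" "x \<noteq> y"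
      show False
      proof (cases "x < y")
        case True then show False using two[of x y] xy by auto
      next
        case False then show False using two[of y x] xy by auto
      qed
    qed
    then show ?thesis using card_le_Suc0_iff_eq[OF fin] by simp
  qed
  have F2: "card {a \<in> F. \<not> 2 * a < m} \<le> 1"
  proof -
    have fin: "finite {a \<in> F. \<not> 2 * a < m}" by (auto simp: F_def)
    have "\<forall>x\<in>{a \<in> F. \<not> 2 * a < m}. \<forall>y\<in>{a \<in> F. \<not> 2 * a < m}. x = y"
    proof (intro ballI, rule ccontr)
      fix x y assume xy: "x \<in> {a \<in> F. \<not> 2 * a < m}" "y \<in> {a \<in> F. \<not> 2 * a < m}" "x \<noteq> y"
      show False
      proof (cases "x < y")
        case True then show False using two[of x y] xy by (auto simp: F_def)
      next
        case False then show False using two[of y x] xy by (auto simp: F_def)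
      qed
    qed
    then show ?thesis using card_le_Suc0_iff_eq[OF fin] by simp
  qed
  have "F = {a \<in> F. 2 * a < m} \<union> {a \<in> F. \<not> 2 * a < m}" by auto
  then have cF: "card F \<le> 2"
    using card_Un_le[of "{a \<in> F. 2 * a < m}" "{a \<in> F. \<not> 2 * a < m}"] F1 F2 by simp
  have "{..<m} = A \<union> B \<union> F" by (auto simp: A_def B_def F_def)
  then have "m = card (A \<union> B \<union> F)" by (metis card_lessThan)
  also have "\<dots> = card A + card B + card F"
  proof -
    have fA: "finite A" "finite B" "finite F" by (auto simp: A_def B_def F_def)
    have "A \<inter> B = {}" "(A \<union> B) \<inter> F = {}" by (auto simp: A_def B_def F_def)
    then show ?thesis using fA by (simp add: card_Un_disjoint)
  qed
  finally have mm: "m \<le> 2 * card A + 2" using cB cF by simp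
  have "A \<noteq> {}" using ne Mc_eq by auto
  moreover have "finite A" by (auto simp: A_def)
  ultimately have "card A \<ge> 1" by (simp add: Suc_le_eq card_gt_0_iff)
  then show ?thesis using mm cA by linarith
qed

lemma card_D: "2 * card {(a, b). a < b \<and> b < (m::nat)} = m * (m - 1)"
proof (induction m)
  case 0 then show ?case by simp
next
  case (Suc m)
  have eq: "{(a, b). a < b \<and> b < Suc m} = {(a, b). a < b \<and> b < m} \<union> (\<lambda>a. (a, m)) ` {..<m}"
    by auto
  have fin: "finite {(a, b). a < b \<and> b < m}"
    by (rule finite_subset[of _ "{..<m} \<times> {..<m}"]) auto
  have "card {(a, b). a < b \<and> b < Suc m} = card {(a, b). a < b \<and> b < m} + card ((\<lambda>a. (a, m)) ` {..<m})"
    unfolding eq by (rule card_Un_disjoint) (use fin in auto)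
  also have "card ((\<lambda>a. (a, m)) ` {..<m}) = m" by (subst card_image) (auto simp: inj_on_def)
  finally show ?case using Suc.IH by (cases m) (auto simp: algebra_simps)
qed

lemma D_fin: "finite {(a, b). a < b \<and> b < (m::nat)}"
  by (rule finite_subset[of _ "{..<m} \<times> {..<m}"]) auto

lemma sum_D_Mc:
  assumes "m > 0"
  shows "(\<Sum>q\<in>{(a, b). a < b \<and> b < m}. f q) = (\<Sum>c<m. \<Sum>q\<in>Mc m c. f q)"
proof -
  have "(\<Sum>c<m. \<Sum>q | q \<in> {(a, b). a < b \<and> b < m} \<and> (fst q + snd q) mod m = c. f q)
      = (\<Sum>q\<in>{(a, b). a < b \<and> b < m}. f q)"
    by (rule sum.group) (use D_fin assms in auto)
  moreover have "{q. q \<in> {(a, b). a < b \<and> b < m} \<and> (fst q + snd q) mod m = c} = Mc m c" for c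
    by (auto simp: Mc_def)
  ultimately show ?thesis by simp
qed

lemma card_D_Mc:
  assumes "m > 0"
  shows "card {(a, b). a < b \<and> b < m} = (\<Sum>c<m. card (Mc m c))"
  using sum_D_Mc[OF assms, of "\<lambda>_. 1::nat"] by simp

lemma Mc_sub: "Mc m c \<subseteq> {(a, b). a < b \<and> b < m}"
  by (auto simp: Mc_def)


definition conc :: "(real \<times> real \<times> nat) \<times> (real \<times> real \<times> nat) \<Rightarrow> bool" where
  "conc z \<longleftrightarrow> (fst (fst z) - fst (snd z)) * (fst (snd (fst z)) - fst (snd (snd z))) > 0"

definition hh :: "(real \<times> real \<times> nat) \<times> (real \<times> real \<times> nat) \<Rightarrow> real" where
  "hh z = (if conc z then 1 else -1)"

definition KK :: "nat \<Rightarrow> ((real \<times> real \<times> nat) \<times> (real \<times> real \<times> nat)) set" where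
  "KK k = {z. snd (snd (fst z)) = k \<and> snd (snd (snd z)) = k}"

lemma conc_meas[measurable]: "Measurable.pred (obs_space \<Otimes>\<^sub>M obs_space) conc"
  unfolding conc_def obs_space_def by measurable

lemma hh_meas[measurable]: "hh \<in> borel_measurable (obs_space \<Otimes>\<^sub>M obs_space)"
  unfolding hh_def by measurable

lemma KK_meas[measurable]: "KK k \<in> sets (obs_space \<Otimes>\<^sub>M obs_space)"
proof -
  have "{z \<in> space (obs_space \<Otimes>\<^sub>M obs_space). snd (snd (fst z)) = k \<and> snd (snd (snd z)) = k} \<in> sets (obs_space \<Otimes>\<^sub>M obs_space)"
    unfolding obs_space_def by measurable
  moreover have "{z \<in> space (obs_space \<Otimes>\<^sub>M obs_space). snd (snd (fst z)) = k \<and> snd (snd (snd z)) = k} = KK k"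
    by (auto simp: KK_def obs_space_def space_pair_measure)
  ultimately show ?thesis by simp
qed

lemma hh_bound: "\<bar>hh z\<bar> \<le> 1" by (simp add: hh_def)

lemma hh_sym: "hh (u, v) = hh (v, u)"
  unfolding hh_def conc_def by (simp add: algebra_simps)

locale setting =
  fixes M :: "'a measure" and n k :: nat and XSj XSl :: "nat \<Rightarrow> 'a \<Rightarrow> real"
    and YS :: "nat \<Rightarrow> 'a \<Rightarrow> nat" and mu :: "(real \<times> real \<times> nat) measure" and y :: "nat \<Rightarrow> nat"
  assumes P: "prob_space M"
  and Tm: "\<And>i. i \<in> {1..n} \<Longrightarrow> trip (XSj i) (XSl i) (YS i) \<in> M \<rightarrow>\<^sub>M obs_space"
  and Td: "\<And>i. i \<in> {1..n} \<Longrightarrow> distr M obs_space (trip (XSj i) (XSl i) (YS i)) = mu"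
  and ind: "prob_space.indep_vars M (\<lambda>_. obs_space) (\<lambda>i. trip (XSj i) (XSl i) (YS i)) {1..n}"
  and mup: "prob_space mu" and mus: "sets mu = sets obs_space"
  and PE: "measure M {\<omega> \<in> space M. \<forall>i\<in>{1..n}. YS i \<omega> = y i} > 0"
  and m2: "card {i \<in> {1..n}. y i = k} \<ge> 2"
begin

sublocale prob_space M by (rule P)

definition "T i = trip (XSj i) (XSl i) (YS i)"
definition "I = {1..n}"
definition "E = {\<omega> \<in> space M. \<forall>i\<in>{1..n}. YS i \<omega> = y i}"
definition "S = {i \<in> {1..n}. y i = k}"
definition "m = card S"
definition "nu = mu \<Otimes>\<^sub>M mu"
definition "pk = measure nu (KK k)"

lemma T_meas: "i \<in> I \<Longrightarrow> T i \<in> M \<rightarrow>\<^sub>M obs_space"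
  using Tm by (simp add: T_def I_def)

lemma T_distr: "i \<in> I \<Longrightarrow> distr M obs_space (T i) = mu"
  using Td by (simp add: T_def I_def)

lemma T_ind: "indep_vars (\<lambda>_. obs_space) T I"
  using ind by (simp add: T_def[abs_def] I_def)

lemma YS_T: "snd (snd (T i \<omega>)) = YS i \<omega>"
  by (simp add: T_def trip_def)

lemma YS_meas: "i \<in> I \<Longrightarrow> YS i \<in> M \<rightarrow>\<^sub>M count_space UNIV"
proof -
  assume i: "i \<in> I"
  have "(\<lambda>\<omega>. snd (snd (T i \<omega>))) \<in> M \<rightarrow>\<^sub>M count_space UNIV"
    using T_meas[OF i] unfolding obs_space_def by measurable
  then show ?thesis by (simp add: YS_T)
qed

lemma E_meas: "E \<in> sets M"
proof -
  have "E = (\<Inter>i\<in>I. {\<omega> \<in> space M. YS i \<omega> = y i}) \<inter> space M"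
    by (auto simp: E_def I_def)
  also have "\<dots> \<in> sets M"
  proof (cases "I = {}")
    case True then show ?thesis by simp
  next
    case False
    have "(\<Inter>i\<in>I. {\<omega> \<in> space M. YS i \<omega> = y i}) \<in> sets M"
    proof (rule sets.finite_INT)
      show "finite I" by (simp add: I_def)
      show "I \<noteq> {}" by fact
      fix i assume i: "i \<in> I"
      have [measurable]: "YS i \<in> M \<rightarrow>\<^sub>M count_space UNIV" by (rule YS_meas[OF i])
      show "{\<omega> \<in> space M. YS i \<omega> = y i} \<in> sets M" by measurable
    qed
    then show ?thesis by simp
  qed
  finally show ?thesis .
qed

lemma S_sub: "S \<subseteq> I" by (auto simp: S_def I_def)
lemma S_fin: "finite S" by (simp add: S_def)
lemma S_y: "i \<in> S \<Longrightarrow> y i = k" by (simp add: S_def)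

lemma nu_sets: "sets nu = sets (obs_space \<Otimes>\<^sub>M obs_space)"
  unfolding nu_def by (rule sets_pair_measure_cong) (simp_all add: mus)

lemma nu_meas: "borel_measurable nu = borel_measurable (obs_space \<Otimes>\<^sub>M obs_space)"
  by (rule measurable_cong_sets[OF nu_sets refl])

lemma nu_prob: "prob_space nu"
proof -
  interpret a: prob_space mu by (rule mup)
  interpret pair_prob_space mu mu ..
  show ?thesis unfolding nu_def by (rule prob_space_axioms)
qed

lemma key:
  fixes g :: "nat \<times> nat \<Rightarrow> (real \<times> real \<times> nat) \<times> (real \<times> real \<times> nat) \<Rightarrow> real"
  assumes Q: "Q \<subseteq> S \<times> S" "\<forall>q\<in>Q. fst q \<noteq> snd q"
    "\<forall>q\<in>Q. \<forall>q'\<in>Q. q \<noteq> q' \<longrightarrow> {fst q, snd q} \<inter> {fst q', snd q'} = {}"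
   and gm: "\<forall>q\<in>Q. g q \<in> borel_measurable (obs_space \<Otimes>\<^sub>M obs_space)" and gb: "\<forall>q\<in>Q. \<forall>z. \<bar>g q z\<bar> \<le> B"
  shows "(\<integral>\<omega>. indicator E \<omega> * (\<Prod>q\<in>Q. g q (T (fst q) \<omega>, T (snd q) \<omega>)) \<partial>M)
     = (\<Prod>q\<in>Q. \<integral>z. indicator (KK k) z * g q z \<partial>nu)
       * (\<Prod>r\<in>I - (fst ` Q \<union> snd ` Q). \<integral>\<omega>. indicator {u. snd (snd u) = y r} (T r \<omega>) \<partial>M)"
proof -
  define R where "R = I - (fst ` Q \<union> snd ` Q)"
  define g' :: "nat \<times> nat \<Rightarrow> _ \<Rightarrow> real" where "g' q z = g q z * indicator (KK k) z" for q z
  define e :: "nat \<Rightarrow> real \<times> real \<times> nat \<Rightarrow> real" where "e r = indicator {u. snd (snd u) = y r}" for r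
  have fQ: "finite Q" using Q(1) S_fin by (meson finite_SigmaI finite_subset)
  have QI: "Q \<subseteq> I \<times> I" using Q(1) S_sub by auto
  have fR: "finite R" "R \<subseteq> I" by (auto simp: R_def I_def)
  have QR: "\<forall>q\<in>Q. fst q \<notin> R \<and> snd q \<notin> R" by (auto simp: R_def)
  have pt: "indicator E \<omega> * (\<Prod>q\<in>Q. g q (T (fst q) \<omega>, T (snd q) \<omega>)) =
      (\<Prod>q\<in>Q. g' q (T (fst q) \<omega>, T (snd q) \<omega>)) * (\<Prod>r\<in>R. e r (T r \<omega>))" if w: "\<omega> \<in> space M" for \<omega>
  proof (cases "\<omega> \<in> E")
    case True
    then have Y: "\<forall>i\<in>I. YS i \<omega> = y i" by (simp add: E_def I_def)
    have "(\<Prod>q\<in>Q. g' q (T (fst q) \<omega>, T (snd q) \<omega>)) = (\<Prod>q\<in>Q. g q (T (fst q) \<omega>, T (snd q) \<omega>))"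
    proof (rule prod.cong[OF refl])
      fix q assume q: "q \<in> Q"
      then have "fst q \<in> S" "snd q \<in> S" using Q(1) by auto
      then have "YS (fst q) \<omega> = k" "YS (snd q) \<omega> = k" using Y S_sub S_y by auto
      then show "g' q (T (fst q) \<omega>, T (snd q) \<omega>) = g q (T (fst q) \<omega>, T (snd q) \<omega>)"
        by (simp add: g'_def KK_def YS_T indicator_def)
    qed
    moreover have "(\<Prod>r\<in>R. e r (T r \<omega>)) = 1"
      using Y fR by (intro prod.neutral) (auto simp: e_def YS_T)
    ultimately show ?thesis using True by simp
  next
    case False
    then obtain i where i: "i \<in> I" "YS i \<omega> \<noteq> y i" using w by (auto simp: E_def I_def)
    show ?thesis
    proof (cases "i \<in> R")
      case True
      then have "(\<Prod>r\<in>R. e r (T r \<omega>)) = 0"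
        using fR i by (intro prod_zero) (auto simp: e_def YS_T intro!: bexI[of _ i])
      then show ?thesis using False by simp
    next
      case notR: False
      then obtain q where q: "q \<in> Q" "i = fst q \<or> i = snd q" using i by (auto simp: R_def)
      have "i \<in> S" using q Q(1) by auto
      then have "YS i \<omega> \<noteq> k" using i S_y by auto
      then have "g' q (T (fst q) \<omega>, T (snd q) \<omega>) = 0" using q by (auto simp: g'_def KK_def YS_T)
      then have "(\<Prod>q\<in>Q. g' q (T (fst q) \<omega>, T (snd q) \<omega>)) = 0"
        using fQ q by (intro prod_zero) auto
      then show ?thesis using False by simp
    qed
  qed
  have "(\<integral>\<omega>. indicator E \<omega> * (\<Prod>q\<in>Q. g q (T (fst q) \<omega>, T (snd q) \<omega>)) \<partial>M) =
      (\<integral>\<omega>. (\<Prod>q\<in>Q. g' q (T (fst q) \<omega>, T (snd q) \<omega>)) * (\<Prod>r\<in>R. e r (T r \<omega>)) \<partial>M)"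
    by (rule Bochner_Integration.integral_cong[OF refl pt])
  also have "\<dots> = (\<Prod>q\<in>Q. \<integral>\<omega>. g' q (T (fst q) \<omega>, T (snd q) \<omega>) \<partial>M) * (\<Prod>r\<in>R. \<integral>\<omega>. e r (T r \<omega>) \<partial>M)"
  proof (rule group_factor[OF P T_ind fQ QI Q(2) Q(3) fR QR, where B="max B 1"])
    show "\<forall>q\<in>Q. g' q \<in> borel_measurable (obs_space \<Otimes>\<^sub>M obs_space)"
      using gm unfolding g'_def by auto
    show "\<forall>q\<in>Q. \<forall>z. \<bar>g' q z\<bar> \<le> max B 1"
    proof (intro ballI allI)
      fix q z assume "q \<in> Q"
      then have "\<bar>g q z\<bar> \<le> B" using gb by blast
      then show "\<bar>g' q z\<bar> \<le> max B 1" unfolding g'_def by (auto simp: indicator_def max_def)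
    qed
    show "\<forall>r\<in>R. e r \<in> borel_measurable obs_space"
    proof
      fix r
      have "{u \<in> space obs_space. snd (snd u) = y r} \<in> sets obs_space"
        unfolding obs_space_def by measurable
      moreover have "{u \<in> space obs_space. snd (snd u) = y r} = {u. snd (snd u) = y r}"
        by (auto simp: obs_space_def space_pair_measure)
      ultimately show "e r \<in> borel_measurable obs_space" unfolding e_def
        by (intro borel_measurable_indicator) simp
    qed
    show "\<forall>r\<in>R. \<forall>z. \<bar>e r z\<bar> \<le> max B 1" by (auto simp: e_def indicator_def)
  qed
  also have "(\<Prod>q\<in>Q. \<integral>\<omega>. g' q (T (fst q) \<omega>, T (snd q) \<omega>) \<partial>M) = (\<Prod>q\<in>Q. \<integral>z. indicator (KK k) z * g q z \<partial>nu)"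
  proof (rule prod.cong[OF refl])
    fix q assume q: "q \<in> Q"
    have "(\<integral>\<omega>. g' q (T (fst q) \<omega>, T (snd q) \<omega>) \<partial>M) = integral\<^sup>L (mu \<Otimes>\<^sub>M mu) (g' q)"
    proof (rule pair_integral[OF P T_ind])
      show "fst q \<in> I" "snd q \<in> I" "fst q \<noteq> snd q" using q QI Q(2) by auto
      show "distr M obs_space (T (fst q)) = mu" "distr M obs_space (T (snd q)) = mu"
        using T_distr q QI by auto
      show "g' q \<in> borel_measurable (obs_space \<Otimes>\<^sub>M obs_space)"
        using gm q unfolding g'_def by auto
    qed
    then show "(\<integral>\<omega>. g' q (T (fst q) \<omega>, T (snd q) \<omega>) \<partial>M) = (\<integral>z. indicator (KK k) z * g q z \<partial>nu)"
      by (simp add: nu_def g'_def[abs_def] mult.commute)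
  qed
  finally show ?thesis by (simp add: R_def e_def)
qed

lemma E_key1:
  assumes Q: "Q \<subseteq> S \<times> S" "\<forall>q\<in>Q. fst q \<noteq> snd q"
    "\<forall>q\<in>Q. \<forall>q'\<in>Q. q \<noteq> q' \<longrightarrow> {fst q, snd q} \<inter> {fst q', snd q'} = {}"
  shows "measure M E = pk ^ card Q
       * (\<Prod>r\<in>I - (fst ` Q \<union> snd ` Q). \<integral>\<omega>. indicator {u. snd (snd u) = y r} (T r \<omega>) \<partial>M)"
proof -
  have "(\<integral>\<omega>. indicator E \<omega> * (\<Prod>q\<in>Q. (\<lambda>_ _. 1::real) q (T (fst q) \<omega>, T (snd q) \<omega>)) \<partial>M)
     = (\<Prod>q\<in>Q. \<integral>z. indicator (KK k) z * (\<lambda>_ _. 1::real) q z \<partial>nu)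
       * (\<Prod>r\<in>I - (fst ` Q \<union> snd ` Q). \<integral>\<omega>. indicator {u. snd (snd u) = y r} (T r \<omega>) \<partial>M)"
    by (rule key[OF Q, where B=1]) auto
  moreover have "(\<integral>\<omega>. indicator E \<omega> * (\<Prod>q\<in>Q. (\<lambda>_ _. 1::real) q (T (fst q) \<omega>, T (snd q) \<omega>)) \<partial>M) = measure M E"
    using E_meas by simp
  moreover have "(\<integral>z. indicator (KK k) z * (\<lambda>_ _. 1::real) q z \<partial>nu) = pk" for q
  proof -
    interpret nu: prob_space nu by (rule nu_prob)
    have "KK k \<in> sets nu" using nu_sets KK_meas by simp
    then show ?thesis by (simp add: pk_def)
  qed
  ultimately show ?thesis by simp
qed

lemma exists_pair: "\<exists>a b. a \<in> S \<and> b \<in> S \<and> a \<noteq> b"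
proof -
  have "card S \<ge> 2" using m2 by (simp add: S_def)
  then show ?thesis
    by (metis One_nat_def card.empty card_le_Suc0_iff_eq not_less_eq_eq numeral_2_eq_2 S_fin zero_le)
qed

lemma pk_pos: "pk > 0"
proof -
  obtain a b where ab: "a \<in> S" "b \<in> S" "a \<noteq> b" using exists_pair by blast
  have "measure M E = pk ^ card {(a, b)} * (\<Prod>r\<in>I - (fst ` {(a, b)} \<union> snd ` {(a, b)}). \<integral>\<omega>. indicator {u. snd (snd u) = y r} (T r \<omega>) \<partial>M)"
    by (rule E_key1) (use ab in auto)
  moreover have "measure M E > 0" using PE by (simp add: E_def)
  ultimately have "pk \<noteq> 0" by auto
  moreover have "pk \<ge> 0" by (simp add: pk_def)
  ultimately show ?thesis by simp
qed

lemma key2: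
  fixes g :: "nat \<times> nat \<Rightarrow> (real \<times> real \<times> nat) \<times> (real \<times> real \<times> nat) \<Rightarrow> real"
  assumes Q: "Q \<subseteq> S \<times> S" "\<forall>q\<in>Q. fst q \<noteq> snd q"
    "\<forall>q\<in>Q. \<forall>q'\<in>Q. q \<noteq> q' \<longrightarrow> {fst q, snd q} \<inter> {fst q', snd q'} = {}"
   and gm: "\<forall>q\<in>Q. g q \<in> borel_measurable (obs_space \<Otimes>\<^sub>M obs_space)" and gb: "\<forall>q\<in>Q. \<forall>z. \<bar>g q z\<bar> \<le> B"
  shows "(\<integral>\<omega>. indicator E \<omega> * (\<Prod>q\<in>Q. g q (T (fst q) \<omega>, T (snd q) \<omega>)) \<partial>M)
     = measure M E * (\<Prod>q\<in>Q. (\<integral>z. indicator (KK k) z * g q z \<partial>nu) / pk)"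
proof -
  define Rq :: real where "Rq = (\<Prod>r\<in>I - (fst ` Q \<union> snd ` Q). \<integral>\<omega>. indicator {u. snd (snd u) = y r} (T r \<omega>) \<partial>M)"
  define G :: real where "G = (\<Prod>q\<in>Q. \<integral>z. indicator (KK k) z * g q z \<partial>nu)"
  have fQ: "finite Q" using Q(1) S_fin by (meson finite_SigmaI finite_subset)
  have l: "(\<integral>\<omega>. indicator E \<omega> * (\<Prod>q\<in>Q. g q (T (fst q) \<omega>, T (snd q) \<omega>)) \<partial>M) = G * Rq"
    unfolding G_def Rq_def by (rule key[OF Q gm gb])
  have e: "measure M E = pk ^ card Q * Rq" unfolding Rq_def by (rule E_key1[OF Q])
  have "(\<Prod>q\<in>Q. (\<integral>z. indicator (KK k) z * g q z \<partial>nu) / pk) = G / pk ^ card Q"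
    unfolding G_def using fQ by (simp add: prod_dividef)
  then show ?thesis using l e pk_pos by simp
qed

end


context setting
begin

definition "tau0 = (\<integral>z. indicator (KK k) z * hh z \<partial>nu) / pk"

lemma cond_tau_eq: "cond_tau mu k = tau0"
proof -
  interpret nu: prob_space nu by (rule nu_prob)
  define CC where "CC = {z. conc z} \<inter> KK k"
  have "{z \<in> space (obs_space \<Otimes>\<^sub>M obs_space). conc z} \<in> sets (obs_space \<Otimes>\<^sub>M obs_space)"
    by measurable
  moreover have "{z \<in> space (obs_space \<Otimes>\<^sub>M obs_space). conc z} = {z. conc z}"
    by (auto simp: obs_space_def space_pair_measure)
  ultimately have "CC \<in> sets (obs_space \<Otimes>\<^sub>M obs_space)" unfolding CC_def using KK_meas by auto
  then have CCs: "CC \<in> sets nu" using nu_sets by simp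
  have KKs: "KK k \<in> sets nu" using nu_sets KK_meas by simp
  have "(\<integral>z. indicator (KK k) z * hh z \<partial>nu) = (\<integral>z. 2 * indicator CC z - indicator (KK k) z \<partial>nu)"
    by (rule Bochner_Integration.integral_cong) (auto simp: hh_def indicator_def CC_def)
  also have "\<dots> = 2 * measure nu CC - pk"
    using CCs KKs by (subst Bochner_Integration.integral_diff)
      (auto simp: pk_def less_top[symmetric] intro!: integrable_real_indicator)
  finally have t: "tau0 = (2 * measure nu CC - pk) / pk" by (simp add: tau0_def)
  have e1: "{(u, v). (fst u - fst v) * (fst (snd u) - fst (snd v)) > 0 \<and> snd (snd u) = k \<and> snd (snd v) = k} = CC"
    by (auto simp: CC_def conc_def KK_def)
  have e2: "{(u, v). snd (snd u) = k \<and> snd (snd v) = k} = KK k"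
    by (auto simp: KK_def)
  show ?thesis unfolding cond_tau_def e1 e2 t using pk_pos
    by (simp add: nu_def[symmetric] pk_def[symmetric] field_simps)
qed

definition "s = enumerate S"
definition "PS = {(i, t). i \<in> S \<and> t \<in> S \<and> i < t}"
definition "D = {(a, b). a < b \<and> b < m}"

lemma s_mono: "a < b \<Longrightarrow> b < m \<Longrightarrow> s a < s b"
  unfolding s_def m_def using S_fin by (simp add: finite_enumerate_mono)

lemma s_in: "a < m \<Longrightarrow> s a \<in> S"
  unfolding s_def m_def using S_fin by (simp add: finite_enumerate_in_set)

lemma s_inj: "inj_on s {..<m}"
proof (rule inj_onI)
  fix a b assume "a \<in> {..<m}" "b \<in> {..<m}" "s a = s b"
  then show "a = b" using s_mono by (metis lessThan_iff linorder_neqE_nat less_irrefl)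
qed

lemma s_img: "s ` {..<m} = S"
proof -
  have "s ` {..<m} \<subseteq> S" using s_in by auto
  moreover have "card (s ` {..<m}) = card S" using s_inj by (simp add: card_image m_def)
  ultimately show ?thesis using S_fin by (simp add: card_subset_eq)
qed

lemma PS_img: "PS = (\<lambda>(a, b). (s a, s b)) ` D"
proof (intro equalityI subsetI)
  fix p assume "p \<in> PS"
  then obtain i t where p: "p = (i, t)" "i \<in> S" "t \<in> S" "i < t" by (auto simp: PS_def)
  obtain a where a: "a < m" "i = s a" using p(2) s_img by auto
  obtain b where b: "b < m" "t = s b" using p(3) s_img by auto
  have "a < b"
  proof (rule ccontr)
    assume "\<not> a < b"
    then have "b < a \<or> b = a" by auto
    then show False using s_mono[of b a] a b p(4) by auto
  qed
  then show "p \<in> (\<lambda>(a, b). (s a, s b)) ` D" using a b p by (auto simp: D_def)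
next
  fix p assume "p \<in> (\<lambda>(a, b). (s a, s b)) ` D"
  then obtain a b where "p = (s a, s b)" "a < b" "b < m" by (auto simp: D_def)
  then show "p \<in> PS" using s_mono s_in by (auto simp: PS_def)
qed

lemma PS_inj: "inj_on (\<lambda>(a, b). (s a, s b)) D"
  using s_inj by (auto simp: inj_on_def D_def)

lemma card_PS: "2 * card PS = m * (m - 1)"
  unfolding PS_img using PS_inj card_D[of m] by (simp add: card_image D_def)

lemma m_ge2: "m \<ge> 2" using m2 by (simp add: m_def S_def)

lemma PS_fin: "finite PS"
  by (rule finite_subset[of _ "S \<times> S"]) (auto simp: PS_def S_fin)

definition "Ust \<omega> = 2 / (real m * (real m - 1)) * (\<Sum>p\<in>PS. hh (T (fst p) \<omega>, T (snd p) \<omega>))"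

lemma on_E:
  assumes w: "\<omega> \<in> E"
  shows "pi_hat n YS k \<omega> = real m / real n" "tau_hat n XSj XSl YS k \<omega> = Ust \<omega>"
proof -
  have Y: "\<forall>i\<in>{1..n}. YS i \<omega> = y i" using w by (simp add: E_def)
  have nk: "n_k n YS k \<omega> = m"
    unfolding n_k_def m_def S_def using Y by (intro arg_cong[where f=card]) auto
  then show "pi_hat n YS k \<omega> = real m / real n" by (simp add: pi_hat_def)
  define F where "F i t = (if (XSj i \<omega> - XSj t \<omega>) * (XSl i \<omega> - XSl t \<omega>) > 0 \<and> YS i \<omega> = k \<and> YS t \<omega> = k
           then 1 else (0::real))" for i t
  have "(\<Sum>i\<in>{1..n}. \<Sum>t\<in>{i<..n}. F i t) = (\<Sum>p\<in>Sigma {1..n} (\<lambda>i. {i<..n}). F (fst p) (snd p))"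
    by (simp add: sum.Sigma split_def)
  also have "\<dots> = (\<Sum>p\<in>PS. F (fst p) (snd p))"
  proof (rule sum.mono_neutral_right)
    show "finite (Sigma {1..n} (\<lambda>i. {i<..n}))" by auto
    show "PS \<subseteq> Sigma {1..n} (\<lambda>i. {i<..n})" by (auto simp: PS_def S_def)
    show "\<forall>p\<in>Sigma {1..n} (\<lambda>i. {i<..n}) - PS. F (fst p) (snd p) = 0"
      using Y by (auto simp: F_def PS_def S_def)
  qed
  also have "\<dots> = (\<Sum>p\<in>PS. if conc (T (fst p) \<omega>, T (snd p) \<omega>) then 1 else 0)"
    using Y by (intro sum.cong refl) (auto simp: F_def PS_def S_def conc_def T_def trip_def)
  finally have DS: "(\<Sum>i\<in>{1..n}. \<Sum>t\<in>{i<..n}. F i t) = (\<Sum>p\<in>PS. if conc (T (fst p) \<omega>, T (snd p) \<omega>) then 1 else 0)" .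
  have hsum: "(\<Sum>p\<in>PS. hh (T (fst p) \<omega>, T (snd p) \<omega>)) = 2 * (\<Sum>p\<in>PS. if conc (T (fst p) \<omega>, T (snd p) \<omega>) then 1 else 0) - real (card PS)"
  proof -
    have "(\<Sum>p\<in>PS. hh (T (fst p) \<omega>, T (snd p) \<omega>)) = (\<Sum>p\<in>PS. 2 * (if conc (T (fst p) \<omega>, T (snd p) \<omega>) then 1 else 0) - 1)"
      by (intro sum.cong refl) (simp add: hh_def)
    also have "\<dots> = 2 * (\<Sum>p\<in>PS. if conc (T (fst p) \<omega>, T (snd p) \<omega>) then 1 else 0) - real (card PS)"
      by (simp add: sum_subtractf sum_distrib_left)
    finally show ?thesis .
  qed
  have cPS: "real (card PS) = real m * (real m - 1) / 2"
  proof -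
    have "real (2 * card PS) = real (m * (m - 1))" using card_PS by metis
    then have "2 * real (card PS) = real m * real (m - 1)" by simp
    moreover have "real (m - 1) = real m - 1" using m_ge2 by (simp add: of_nat_diff)
    ultimately show ?thesis by simp
  qed
  have mm: "real m * (real m - 1) > 0" using m_ge2 by simp
  show "tau_hat n XSj XSl YS k \<omega> = Ust \<omega>"
  proof -
    define X where "X = (\<Sum>p\<in>PS. if conc (T (fst p) \<omega>, T (snd p) \<omega>) then 1 else (0::real))"
    have "tau_hat n XSj XSl YS k \<omega> = 4 / (real m * (real m - 1)) * X - 1"
      unfolding tau_hat_def nk F_def[symmetric] DS X_def ..
    also have "\<dots> = 2 / (real m * (real m - 1)) * (2 * X - real m * (real m - 1) / 2)"
    proof -
      define d where "d = real m * (real m - 1)"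
      have "d \<noteq> 0" using mm unfolding d_def by linarith
      then have "2 / d * (d / 2) = 1" by simp
      moreover have "2 / d * (2 * X - d / 2) = 4 / d * X - 2 / d * (d / 2)" by (simp add: algebra_simps)
      ultimately show ?thesis unfolding d_def[symmetric] by simp
    qed
    also have "\<dots> = Ust \<omega>" unfolding Ust_def hsum cPS X_def ..
    finally show ?thesis .
  qed
qed

end


context setting
begin

lemma pair_meas:
  assumes "i \<in> I" "t \<in> I" "g \<in> borel_measurable (obs_space \<Otimes>\<^sub>M obs_space)"
  shows "(\<lambda>\<omega>. g (T i \<omega>, T t \<omega>)) \<in> borel_measurable M"
  by (rule measurable_compose[OF measurable_Pair[OF T_meas[OF assms(1)] T_meas[OF assms(2)]] assms(3)])

lemma bint:
  fixes f :: "'a \<Rightarrow> real" and B :: real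
  assumes "f \<in> borel_measurable M" "\<And>\<omega>. \<omega> \<in> space M \<Longrightarrow> \<bar>f \<omega>\<bar> \<le> B"
  shows "integrable M f"
  by (rule integrable_const_bound[where B=B]) (use assms in auto)

lemma XSj_meas: "i \<in> I \<Longrightarrow> XSj i \<in> borel_measurable M"
proof -
  assume i: "i \<in> I"
  have "(\<lambda>\<omega>. fst (T i \<omega>)) \<in> borel_measurable M"
    using T_meas[OF i] unfolding obs_space_def by measurable
  then show ?thesis by (simp add: T_def trip_def)
qed

lemma XSl_meas: "i \<in> I \<Longrightarrow> XSl i \<in> borel_measurable M"
proof -
  assume i: "i \<in> I"
  have "(\<lambda>\<omega>. fst (snd (T i \<omega>))) \<in> borel_measurable M"
    using T_meas[OF i] unfolding obs_space_def by measurable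
  then show ?thesis by (simp add: T_def trip_def)
qed

lemma card_filter_sum: "finite A \<Longrightarrow> real (card {i\<in>A. P i}) = (\<Sum>i\<in>A. if P i then 1 else 0)"
  by (simp add: sum.If_cases Int_def)

lemma pi_hat_meas: "pi_hat n YS k \<in> borel_measurable M"
proof -
  have eq: "pi_hat n YS k = (\<lambda>\<omega>. (\<Sum>i\<in>I. if YS i \<omega> = k then 1 else 0) / real n)"
  proof
    fix \<omega>
    have "real (n_k n YS k \<omega>) = (\<Sum>i\<in>{1..n}. if YS i \<omega> = k then 1 else 0)"
      unfolding n_k_def by (rule card_filter_sum) simp
    then show "pi_hat n YS k \<omega> = (\<Sum>i\<in>I. if YS i \<omega> = k then 1 else 0) / real n"
      by (simp add: pi_hat_def I_def)
  qed
  have "(\<lambda>\<omega>. (\<Sum>i\<in>I. if YS i \<omega> = k then 1 else (0::real))) \<in> borel_measurable M"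
  proof (rule borel_measurable_sum)
    fix i assume i: "i \<in> I"
    have [measurable]: "YS i \<in> M \<rightarrow>\<^sub>M count_space UNIV" by (rule YS_meas[OF i])
    show "(\<lambda>\<omega>. if YS i \<omega> = k then 1 else (0::real)) \<in> borel_measurable M" by measurable
  qed
  then show ?thesis unfolding eq by measurable
qed

lemma n_k_meas: "(\<lambda>\<omega>. real (n_k n YS k \<omega>)) \<in> borel_measurable M"
proof -
  have "(\<lambda>\<omega>. real n * pi_hat n YS k \<omega>) \<in> borel_measurable M" using pi_hat_meas by measurable
  moreover have "n > 0"
  proof -
    obtain a b where "a \<in> S" using exists_pair by blast
    then show ?thesis using S_sub by (auto simp: I_def)
  qed
  ultimately show ?thesis by (simp add: pi_hat_def)
qed

lemma tau_hat_meas: "tau_hat n XSj XSl YS k \<in> borel_measurable M"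
proof -
  have s: "(\<lambda>\<omega>. \<Sum>i\<in>{1..n}. \<Sum>t\<in>{i<..n}.
          (if (XSj i \<omega> - XSj t \<omega>) * (XSl i \<omega> - XSl t \<omega>) > 0 \<and> YS i \<omega> = k \<and> YS t \<omega> = k
           then 1 else (0::real))) \<in> borel_measurable M"
  proof (rule borel_measurable_sum, rule borel_measurable_sum)
    fix i t assume i: "i \<in> {1..n}" and t: "t \<in> {i<..n}"
    then have "i \<in> I" "t \<in> I" by (auto simp: I_def)
    note [measurable] = YS_meas[OF \<open>i \<in> I\<close>] YS_meas[OF \<open>t \<in> I\<close>] XSj_meas[OF \<open>i \<in> I\<close>] XSj_meas[OF \<open>t \<in> I\<close>]
       XSl_meas[OF \<open>i \<in> I\<close>] XSl_meas[OF \<open>t \<in> I\<close>]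
    show "(\<lambda>\<omega>. if (XSj i \<omega> - XSj t \<omega>) * (XSl i \<omega> - XSl t \<omega>) > 0 \<and> YS i \<omega> = k \<and> YS t \<omega> = k
           then 1 else (0::real)) \<in> borel_measurable M" by measurable
  qed
  note [measurable] = n_k_meas s
  show ?thesis unfolding tau_hat_def[abs_def] by measurable
qed

end


context setting
begin

lemma cPS: "real (card PS) = real m * (real m - 1) / 2"
proof -
  have "real (2 * card PS) = real (m * (m - 1))" using card_PS by metis
  then have "2 * real (card PS) = real m * real (m - 1)" by simp
  moreover have "real (m - 1) = real m - 1" using m_ge2 by (simp add: of_nat_diff)
  ultimately show ?thesis by simp
qed

lemma PS_I: "p \<in> PS \<Longrightarrow> fst p \<in> I \<and> snd p \<in> I \<and> fst p \<noteq> snd p \<and> fst p \<in> S \<and> snd p \<in> S"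
  using S_sub by (auto simp: PS_def)

lemma Ust_meas: "Ust \<in> borel_measurable M"
proof -
  have "(\<lambda>\<omega>. \<Sum>p\<in>PS. hh (T (fst p) \<omega>, T (snd p) \<omega>)) \<in> borel_measurable M"
  proof (rule borel_measurable_sum)
    fix p assume "p \<in> PS"
    then show "(\<lambda>\<omega>. hh (T (fst p) \<omega>, T (snd p) \<omega>)) \<in> borel_measurable M"
      using PS_I by (intro pair_meas) auto
  qed
  then show ?thesis unfolding Ust_def[abs_def] by measurable
qed

lemma E_ind_meas: "indicator E \<in> borel_measurable M"
  using E_meas by measurable

lemma part1_int: "(\<integral>\<omega>. indicator E \<omega> * Ust \<omega> \<partial>M) = measure M E * tau0"
proof -
  define c where "c = 2 / (real m * (real m - 1))"
  have each: "(\<integral>\<omega>. indicator E \<omega> * hh (T (fst p) \<omega>, T (snd p) \<omega>) \<partial>M) = measure M E * tau0"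
    if p: "p \<in> PS" for p
  proof -
    have "(\<integral>\<omega>. indicator E \<omega> * (\<Prod>q\<in>{p}. (\<lambda>_. hh) q (T (fst q) \<omega>, T (snd q) \<omega>)) \<partial>M)
        = measure M E * (\<Prod>q\<in>{p}. (\<integral>z. indicator (KK k) z * (\<lambda>_. hh) q z \<partial>nu) / pk)"
      by (rule key2[where B=1]) (use PS_I[OF p] hh_bound in \<open>auto simp: mem_Times_iff\<close>)
    then show ?thesis by (simp add: tau0_def)
  qed
  have intg: "integrable M (\<lambda>\<omega>. indicator E \<omega> * hh (T (fst p) \<omega>, T (snd p) \<omega>))" if p: "p \<in> PS" for p
  proof (rule bint[where B=1])
    show "(\<lambda>\<omega>. indicator E \<omega> * hh (T (fst p) \<omega>, T (snd p) \<omega>)) \<in> borel_measurable M"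
      using PS_I[OF p] E_ind_meas pair_meas[OF _ _ hh_meas] by (intro borel_measurable_times) auto
    show "\<bar>indicator E \<omega> * hh (T (fst p) \<omega>, T (snd p) \<omega>)\<bar> \<le> 1" for \<omega>
      using hh_bound by (auto simp: indicator_def)
  qed
  have "(\<integral>\<omega>. indicator E \<omega> * Ust \<omega> \<partial>M) = (\<integral>\<omega>. c * (\<Sum>p\<in>PS. indicator E \<omega> * hh (T (fst p) \<omega>, T (snd p) \<omega>)) \<partial>M)"
    by (simp add: Ust_def c_def sum_distrib_left algebra_simps)
  also have "\<dots> = c * (\<Sum>p\<in>PS. \<integral>\<omega>. indicator E \<omega> * hh (T (fst p) \<omega>, T (snd p) \<omega>) \<partial>M)"
  proof -
    have "(\<integral>\<omega>. (\<Sum>p\<in>PS. indicator E \<omega> * hh (T (fst p) \<omega>, T (snd p) \<omega>)) \<partial>M)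
        = (\<Sum>p\<in>PS. \<integral>\<omega>. indicator E \<omega> * hh (T (fst p) \<omega>, T (snd p) \<omega>) \<partial>M)"
      by (rule Bochner_Integration.integral_sum) (use intg in auto)
    then show ?thesis by simp
  qed
  also have "\<dots> = c * (real (card PS) * (measure M E * tau0))"
    using each by simp
  also have "\<dots> = measure M E * tau0"
  proof -
    have "real m * (real m - 1) \<noteq> 0" using m_ge2 by simp
    then have "c * real (card PS) = 1" unfolding c_def cPS by simp
    then show ?thesis by (metis mult.assoc mult_1)
  qed
  finally show ?thesis .
qed

lemma part1:
  "integral\<^sup>L (uniform_measure M E) (\<lambda>\<omega>. pi_hat n YS k \<omega> * tau_hat n XSj XSl YS k \<omega>)
     = real m / real n * tau0"
proof -
  have PE': "measure M E > 0" using PE by (simp add: E_def)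
  have "integral\<^sup>L (uniform_measure M E) (\<lambda>\<omega>. pi_hat n YS k \<omega> * tau_hat n XSj XSl YS k \<omega>)
     = (\<integral>\<omega>. indicator E \<omega> * (pi_hat n YS k \<omega> * tau_hat n XSj XSl YS k \<omega>) \<partial>M) / measure M E"
    by (rule integral_uniform[OF finite_measure_axioms E_meas PE']) (use pi_hat_meas tau_hat_meas in measurable)
  also have "(\<integral>\<omega>. indicator E \<omega> * (pi_hat n YS k \<omega> * tau_hat n XSj XSl YS k \<omega>) \<partial>M)
      = (\<integral>\<omega>. real m / real n * (indicator E \<omega> * Ust \<omega>) \<partial>M)"
    by (rule Bochner_Integration.integral_cong) (auto simp: indicator_def on_E)
  also have "\<dots> = real m / real n * (measure M E * tau0)"
    by (simp add: part1_int)
  finally show ?thesis using PE' by simp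
qed

end


context setting
begin

definition "W q \<omega> = hh (T (s (fst q)) \<omega>, T (s (snd q)) \<omega>) - tau0"
definition "Nc c = card (Mc m c)"

lemma D_s: "q \<in> D \<Longrightarrow> s (fst q) \<in> S \<and> s (snd q) \<in> S \<and> s (fst q) \<noteq> s (snd q) \<and> s (fst q) \<in> I \<and> s (snd q) \<in> I"
  using s_in s_mono S_sub by (auto simp: D_def) (metis less_irrefl)+

lemma W_meas: "q \<in> D \<Longrightarrow> W q \<in> borel_measurable M"
proof -
  assume q: "q \<in> D"
  have "(\<lambda>\<omega>. hh (T (s (fst q)) \<omega>, T (s (snd q)) \<omega>)) \<in> borel_measurable M"
    using D_s[OF q] by (intro pair_meas hh_meas) auto
  then show ?thesis unfolding W_def[abs_def] by measurable
qed

lemma W_bound: "\<bar>W q \<omega>\<bar> \<le> 1 + \<bar>tau0\<bar>"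
  using hh_bound[of "(T (s (fst q)) \<omega>, T (s (snd q)) \<omega>)"] unfolding W_def by linarith

lemma card_D_PS: "card D = card PS"
  unfolding PS_img using PS_inj by (simp add: card_image)

lemma cardD_pos: "real (card D) > 0"
proof -
  have "real m * (real m - 1) > 0" using m_ge2 by simp
  then show ?thesis using card_D_PS cPS by simp
qed

lemma D_fin': "finite D" unfolding D_def by (rule D_fin)

lemma Ust_W: "Ust \<omega> - tau0 = (\<Sum>q\<in>D. W q \<omega>) / real (card D)"
proof -
  have s1: "(\<Sum>p\<in>PS. hh (T (fst p) \<omega>, T (snd p) \<omega>)) = (\<Sum>q\<in>D. hh (T (s (fst q)) \<omega>, T (s (snd q)) \<omega>))"
    unfolding PS_img by (subst sum.reindex[OF PS_inj]) (simp add: split_def)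
  have c: "2 / (real m * (real m - 1)) = 1 / real (card D)"
  proof -
    have "real m * (real m - 1) = 2 * real (card D)" using card_D_PS cPS by simp
    then show ?thesis using cardD_pos by simp
  qed
  have "(\<Sum>q\<in>D. W q \<omega>) = (\<Sum>q\<in>D. hh (T (s (fst q)) \<omega>, T (s (snd q)) \<omega>)) - real (card D) * tau0"
    by (simp add: W_def sum_subtractf)
  then show ?thesis using cardD_pos unfolding Ust_def s1 c by (simp add: field_simps)
qed

lemma Mc_D: "Mc m c \<subseteq> D"
  using Mc_sub by (simp add: D_def)

lemma mgf_block:
  assumes c: "c < m" and N: "Nc c > 0"
  shows "(\<integral>\<omega>. indicator E \<omega> * exp (l / real (Nc c) * (\<Sum>q\<in>Mc m c. W q \<omega>)) \<partial>M) \<le> measure M E * exp (2 * l\<^sup>2 / real m)"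
proof -
  define lc where "lc = l / real (Nc c)"
  define f where "f = (\<lambda>(a, b). (s a, s b))"
  define Q where "Q = f ` Mc m c"
  define g :: "nat \<times> nat \<Rightarrow> _ \<Rightarrow> real" where "g = (\<lambda>_ z. exp (lc * (hh z - tau0)))"
  have inj: "inj_on f (Mc m c)" unfolding f_def using PS_inj Mc_D by (rule inj_on_subset)
  have finMc: "finite (Mc m c)" using D_fin' Mc_D by (rule finite_subset[rotated])
  have pt: "exp (lc * (\<Sum>q\<in>Mc m c. W q \<omega>)) = (\<Prod>q\<in>Q. g q (T (fst q) \<omega>, T (snd q) \<omega>))" for \<omega>
  proof -
    have "exp (lc * (\<Sum>q\<in>Mc m c. W q \<omega>)) = exp (\<Sum>q\<in>Mc m c. lc * W q \<omega>)"
      by (simp add: sum_distrib_left)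
    also have "\<dots> = (\<Prod>q\<in>Mc m c. exp (lc * W q \<omega>))"
      using finMc by (simp add: exp_sum)
    also have "\<dots> = (\<Prod>q\<in>Q. g q (T (fst q) \<omega>, T (snd q) \<omega>))"
      unfolding Q_def by (subst prod.reindex[OF inj]) (simp add: g_def W_def f_def split_def)
    finally show ?thesis .
  qed
  have QS: "Q \<subseteq> S \<times> S" "\<forall>q\<in>Q. fst q \<noteq> snd q"
  proof -
    have "q \<in> D" if "q \<in> Mc m c" for q using that Mc_D by blast
    then have "\<And>q. q \<in> Mc m c \<Longrightarrow> s (fst q) \<in> S \<and> s (snd q) \<in> S \<and> s (fst q) \<noteq> s (snd q)"
      using D_s by blast
    then show "Q \<subseteq> S \<times> S" "\<forall>q\<in>Q. fst q \<noteq> snd q" by (auto simp: Q_def f_def)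
  qed
  have Qd: "\<forall>q\<in>Q. \<forall>q'\<in>Q. q \<noteq> q' \<longrightarrow> {fst q, snd q} \<inter> {fst q', snd q'} = {}"
  proof (intro ballI impI)
    fix q q' assume q: "q \<in> Q" and q': "q' \<in> Q" and ne: "q \<noteq> q'"
    obtain a b where ab: "(a, b) \<in> Mc m c" "q = (s a, s b)" using q by (auto simp: Q_def f_def)
    obtain a' b' where ab': "(a', b') \<in> Mc m c" "q' = (s a', s b')" using q' by (auto simp: Q_def f_def)
    have "(a, b) \<noteq> (a', b')" using ne ab ab' by auto
    then have dj: "{a, b} \<inter> {a', b'} = {}" using Mc_disj ab(1) ab'(1) by blast
    have lt: "a < m" "b < m" "a' < m" "b' < m" using ab(1) ab'(1) by (auto simp: Mc_def)
    have "s x \<noteq> s x'" if "x \<in> {a, b}" "x' \<in> {a', b'}" for x x'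
    proof
      assume "s x = s x'"
      moreover have "x \<in> {..<m}" "x' \<in> {..<m}" using that lt by auto
      ultimately have "x = x'" using s_inj by (meson inj_onD)
      then show False using that dj by auto
    qed
    then show "{fst q, snd q} \<inter> {fst q', snd q'} = {}" using ab ab' by auto
  qed
  have gm: "\<forall>q\<in>Q. g q \<in> borel_measurable (obs_space \<Otimes>\<^sub>M obs_space)"
    unfolding g_def by measurable
  have gb: "\<forall>q\<in>Q. \<forall>z. \<bar>g q z\<bar> \<le> exp (\<bar>lc\<bar> * (1 + \<bar>tau0\<bar>))"
  proof (intro ballI allI)
    fix q z
    have "lc * (hh z - tau0) \<le> \<bar>lc * (hh z - tau0)\<bar>" by simp
    also have "\<dots> = \<bar>lc\<bar> * \<bar>hh z - tau0\<bar>" by (simp add: abs_mult)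
    also have "\<dots> \<le> \<bar>lc\<bar> * (1 + \<bar>tau0\<bar>)"
      using hh_bound[of z] by (intro mult_left_mono) auto
    finally show "\<bar>g q z\<bar> \<le> exp (\<bar>lc\<bar> * (1 + \<bar>tau0\<bar>))" by (simp add: g_def)
  qed
  have k2: "(\<integral>\<omega>. indicator E \<omega> * (\<Prod>q\<in>Q. g q (T (fst q) \<omega>, T (snd q) \<omega>)) \<partial>M)
     = measure M E * (\<Prod>q\<in>Q. (\<integral>z. indicator (KK k) z * g q z \<partial>nu) / pk)"
    by (rule key2[OF QS Qd gm gb])
  have hc: "(\<integral>z. indicator (KK k) z * exp (lc * (hh z - tau0)) \<partial>nu) \<le> measure nu (KK k) * exp (lc\<^sup>2 / 2)"
  proof (rule hoeff_cond[where A="KK k"])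
    interpret nu: prob_space nu by (rule nu_prob)
    show "finite_measure nu" by (rule nu.finite_measure_axioms)
    show "KK k \<in> sets nu" using nu_sets KK_meas by simp
    show "measure nu (KK k) > 0" using pk_pos by (simp add: pk_def)
    show "hh \<in> borel_measurable nu" unfolding nu_meas by (rule hh_meas)
    show "\<forall>z. \<bar>hh z\<bar> \<le> 1" using hh_bound by simp
    show "tau0 = (\<integral>z. indicator (KK k) z * hh z \<partial>nu) / measure nu (KK k)" by (simp add: tau0_def pk_def)
  qed
  have fac: "0 \<le> (\<integral>z. indicator (KK k) z * g q z \<partial>nu) / pk \<and> (\<integral>z. indicator (KK k) z * g q z \<partial>nu) / pk \<le> exp (lc\<^sup>2 / 2)" for q
  proof
    show "0 \<le> (\<integral>z. indicator (KK k) z * g q z \<partial>nu) / pk"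
      using pk_pos by (intro divide_nonneg_pos integral_nonneg_AE) (auto simp: g_def)
    show "(\<integral>z. indicator (KK k) z * g q z \<partial>nu) / pk \<le> exp (lc\<^sup>2 / 2)"
      using hc pk_pos by (simp add: g_def divide_le_eq mult.commute pk_def)
  qed
  have "(\<Prod>q\<in>Q. (\<integral>z. indicator (KK k) z * g q z \<partial>nu) / pk) \<le> (\<Prod>q\<in>Q. exp (lc\<^sup>2 / 2))"
    by (rule prod_mono) (use fac in auto)
  also have "\<dots> = exp (lc\<^sup>2 / 2) ^ card Q" by simp
  also have "card Q = Nc c" unfolding Q_def Nc_def using inj by (simp add: card_image)
  also have "exp (lc\<^sup>2 / 2) ^ Nc c = exp (real (Nc c) * (lc\<^sup>2 / 2))"
    by (rule exp_of_nat_mult[symmetric])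
  also have "real (Nc c) * (lc\<^sup>2 / 2) = l\<^sup>2 / (2 * real (Nc c))"
    using N by (simp add: lc_def power2_eq_square field_simps)
  also have "exp (l\<^sup>2 / (2 * real (Nc c))) \<le> exp (2 * l\<^sup>2 / real m)"
  proof -
    have "Mc m c \<noteq> {}" using N by (auto simp: Nc_def)
    then have "m \<le> 4 * Nc c" unfolding Nc_def using Mc_card m_ge2 c by blast
    then have "real m \<le> 4 * real (Nc c)" by linarith
    then have "l\<^sup>2 / (2 * real (Nc c)) \<le> 2 * l\<^sup>2 / real m"
    proof -
      have "2 * l\<^sup>2 / (4 * real (Nc c)) \<le> 2 * l\<^sup>2 / real m"
      proof (rule divide_left_mono)
        show "real m \<le> 4 * real (Nc c)" by fact
        show "0 \<le> 2 * l\<^sup>2" by simp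
        have "real m > 0" "real (Nc c) > 0" using N m_ge2 by auto
        then show "0 < 4 * real (Nc c) * real m" by simp
      qed
      moreover have "l\<^sup>2 / (2 * real (Nc c)) = 2 * l\<^sup>2 / (4 * real (Nc c))" by simp
      ultimately show ?thesis by linarith
    qed
    then show ?thesis by simp
  qed
  finally have P: "(\<Prod>q\<in>Q. (\<integral>z. indicator (KK k) z * g q z \<partial>nu) / pk) \<le> exp (2 * l\<^sup>2 / real m)" .
  have "(\<integral>\<omega>. indicator E \<omega> * exp (l / real (Nc c) * (\<Sum>q\<in>Mc m c. W q \<omega>)) \<partial>M)
      = (\<integral>\<omega>. indicator E \<omega> * (\<Prod>q\<in>Q. g q (T (fst q) \<omega>, T (snd q) \<omega>)) \<partial>M)"
    using pt by (simp add: lc_def)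
  also have "\<dots> \<le> measure M E * exp (2 * l\<^sup>2 / real m)"
    unfolding k2 by (rule mult_left_mono[OF P]) simp
  finally show ?thesis .
qed

lemma Ust_bound: "\<bar>Ust \<omega>\<bar> \<le> 1"
proof -
  have "\<bar>\<Sum>p\<in>PS. hh (T (fst p) \<omega>, T (snd p) \<omega>)\<bar> \<le> (\<Sum>p\<in>PS. \<bar>hh (T (fst p) \<omega>, T (snd p) \<omega>)\<bar>)"
    by (rule sum_abs)
  also have "\<dots> \<le> (\<Sum>p\<in>PS. 1)" by (rule sum_mono) (rule hh_bound)
  also have "\<dots> = real m * (real m - 1) / 2" using cPS by simp
  finally have b: "\<bar>\<Sum>p\<in>PS. hh (T (fst p) \<omega>, T (snd p) \<omega>)\<bar> \<le> real m * (real m - 1) / 2" .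
  have mm: "real m * (real m - 1) > 0" using m_ge2 by simp
  have "\<bar>Ust \<omega>\<bar> = 2 / (real m * (real m - 1)) * \<bar>\<Sum>p\<in>PS. hh (T (fst p) \<omega>, T (snd p) \<omega>)\<bar>"
  proof -
    have m1: "real m - 1 > 0" using m_ge2 by simp
    show ?thesis unfolding Ust_def using mm by (simp add: abs_mult abs_of_pos[OF m1])
  qed
  also have "\<dots> \<le> 2 / (real m * (real m - 1)) * (real m * (real m - 1) / 2)"
    using mm b by (intro mult_left_mono) auto
  also have "\<dots> = 1"
  proof -
    define d where "d = real m * (real m - 1)"
    have "d \<noteq> 0" using mm unfolding d_def by linarith
    then show ?thesis unfolding d_def[symmetric] by simp
  qed
  finally show ?thesis .
qed

lemma Nc0: "Nc c = 0 \<Longrightarrow> Mc m c = {}"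
proof -
  assume "Nc c = 0"
  moreover have "finite (Mc m c)" using D_fin' Mc_D by (rule finite_subset[rotated])
  ultimately show ?thesis by (simp add: Nc_def)
qed

lemma V_bound: "\<bar>\<Sum>q\<in>Mc m c. W q \<omega>\<bar> \<le> real (Nc c) * (1 + \<bar>tau0\<bar>)"
proof -
  have "\<bar>\<Sum>q\<in>Mc m c. W q \<omega>\<bar> \<le> (\<Sum>q\<in>Mc m c. \<bar>W q \<omega>\<bar>)" by (rule sum_abs)
  also have "\<dots> \<le> (\<Sum>q\<in>Mc m c. 1 + \<bar>tau0\<bar>)" by (rule sum_mono) (rule W_bound)
  also have "\<dots> = real (Nc c) * (1 + \<bar>tau0\<bar>)" by (simp add: Nc_def)
  finally show ?thesis .
qed

lemma mgf: "(\<integral>\<omega>. indicator E \<omega> * exp (l * (Ust \<omega> - tau0)) \<partial>M) \<le> measure M E * exp (2 * l\<^sup>2 / real m)"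
proof -
  define Pm where "Pm = real (card D)"
  define V where "V c \<omega> = (\<Sum>q\<in>Mc m c. W q \<omega>)" for c \<omega>
  define yv where "yv c \<omega> = (if Nc c = 0 then 0 else l / real (Nc c) * V c \<omega>)" for c \<omega>
  define w where "w c = real (Nc c) / Pm" for c
  define B0 where "B0 = 1 + \<bar>tau0\<bar>"
  have m0: "m > 0" using m_ge2 by simp
  have Pm0: "Pm > 0" using cardD_pos by (simp add: Pm_def)
  have w0: "w c \<ge> 0" for c using Pm0 by (simp add: w_def)
  have sumw: "(\<Sum>c<m. w c) = 1"
  proof -
    have "card D = (\<Sum>c<m. card (Mc m c))" unfolding D_def by (rule card_D_Mc[OF m0])
    then have "Pm = (\<Sum>c<m. real (Nc c))" by (simp add: Pm_def Nc_def)
    then show ?thesis using Pm0 by (simp add: w_def sum_divide_distrib[symmetric])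
  qed
  have wy: "w c * yv c \<omega> = l * V c \<omega> / Pm" for c \<omega>
  proof (cases "Nc c = 0")
    case True
    then have "V c \<omega> = 0" using Nc0 by (simp add: V_def)
    then show ?thesis using True by (simp add: w_def yv_def)
  next
    case False
    then show ?thesis by (simp add: w_def yv_def)
  qed
  have decomp: "l * (Ust \<omega> - tau0) = (\<Sum>c<m. w c * yv c \<omega>)" for \<omega>
  proof -
    have "Ust \<omega> - tau0 = (\<Sum>c<m. V c \<omega>) / Pm"
      unfolding Ust_W Pm_def V_def D_def by (simp add: sum_D_Mc[OF m0])
    then show ?thesis unfolding wy by (simp add: sum_divide_distrib[symmetric] sum_distrib_left)
  qed
  have conv: "exp (l * (Ust \<omega> - tau0)) \<le> (\<Sum>c<m. w c * exp (yv c \<omega>))" for \<omega>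
  proof -
    have "exp (\<Sum>c<m. w c *\<^sub>R yv c \<omega>) \<le> (\<Sum>c<m. w c * exp (yv c \<omega>))"
      by (rule convex_on_sum[OF _ _ exp_convex sumw]) (use m0 w0 in auto)
    then show ?thesis unfolding decomp by simp
  qed
  have yvb: "\<bar>yv c \<omega>\<bar> \<le> \<bar>l\<bar> * B0" for c \<omega>
  proof (cases "Nc c = 0")
    case True then show ?thesis by (simp add: yv_def B0_def)
  next
    case False
    then have N: "real (Nc c) > 0" by simp
    have "\<bar>yv c \<omega>\<bar> = \<bar>l\<bar> / real (Nc c) * \<bar>V c \<omega>\<bar>" using False by (simp add: yv_def abs_mult)
    also have "\<dots> \<le> \<bar>l\<bar> / real (Nc c) * (real (Nc c) * B0)"
      using V_bound[where c=c and \<omega>=\<omega>] by (intro mult_left_mono) (auto simp: V_def B0_def)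
    also have "\<dots> = \<bar>l\<bar> * B0" using N by simp
    finally show ?thesis .
  qed
  have yvm: "yv c \<in> borel_measurable M" for c
  proof -
    have "V c \<in> borel_measurable M" unfolding V_def[abs_def]
    proof (rule borel_measurable_sum)
      fix q assume "q \<in> Mc m c"
      then show "W q \<in> borel_measurable M" using Mc_D W_meas by blast
    qed
    then show ?thesis unfolding yv_def[abs_def] by measurable
  qed
  have int_c: "integrable M (\<lambda>\<omega>. indicator E \<omega> * exp (yv c \<omega>))" for c
  proof (rule bint[where B="exp (\<bar>l\<bar> * B0)"])
    show "(\<lambda>\<omega>. indicator E \<omega> * exp (yv c \<omega>)) \<in> borel_measurable M"
      using E_ind_meas yvm by measurable
    show "\<bar>indicator E \<omega> * exp (yv c \<omega>)\<bar> \<le> exp (\<bar>l\<bar> * B0)" for \<omega>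
    proof -
      have "yv c \<omega> \<le> \<bar>l\<bar> * B0" using yvb[of c \<omega>] by linarith
      then show ?thesis by (simp add: indicator_def)
    qed
  qed
  have int_l: "integrable M (\<lambda>\<omega>. indicator E \<omega> * exp (l * (Ust \<omega> - tau0)))"
  proof (rule bint[where B="exp (\<bar>l\<bar> * B0)"])
    show "(\<lambda>\<omega>. indicator E \<omega> * exp (l * (Ust \<omega> - tau0))) \<in> borel_measurable M"
      using E_ind_meas Ust_meas by measurable
    show "\<bar>indicator E \<omega> * exp (l * (Ust \<omega> - tau0))\<bar> \<le> exp (\<bar>l\<bar> * B0)" for \<omega>
    proof -
      have "l * (Ust \<omega> - tau0) \<le> \<bar>l\<bar> * \<bar>Ust \<omega> - tau0\<bar>" by (metis abs_ge_self abs_mult)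
      also have "\<dots> \<le> \<bar>l\<bar> * B0" using Ust_bound[of \<omega>] by (intro mult_left_mono) (auto simp: B0_def)
      finally show ?thesis by (simp add: indicator_def)
    qed
  qed
  have "(\<integral>\<omega>. indicator E \<omega> * exp (l * (Ust \<omega> - tau0)) \<partial>M)
      \<le> (\<integral>\<omega>. (\<Sum>c<m. w c * (indicator E \<omega> * exp (yv c \<omega>))) \<partial>M)"
  proof (rule integral_mono[OF int_l])
    show "integrable M (\<lambda>\<omega>. \<Sum>c<m. w c * (indicator E \<omega> * exp (yv c \<omega>)))"
      using int_c by auto
    fix \<omega>
    have "indicator E \<omega> * exp (l * (Ust \<omega> - tau0)) \<le> indicator E \<omega> * (\<Sum>c<m. w c * exp (yv c \<omega>))"
      using conv[of \<omega>] by (intro mult_left_mono) auto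
    also have "\<dots> = (\<Sum>c<m. w c * (indicator E \<omega> * exp (yv c \<omega>)))"
      by (simp add: sum_distrib_left algebra_simps)
    finally show "indicator E \<omega> * exp (l * (Ust \<omega> - tau0)) \<le> (\<Sum>c<m. w c * (indicator E \<omega> * exp (yv c \<omega>)))" .
  qed
  also have "\<dots> = (\<Sum>c<m. w c * (\<integral>\<omega>. indicator E \<omega> * exp (yv c \<omega>) \<partial>M))"
    by (subst Bochner_Integration.integral_sum) (use int_c in auto)
  also have "\<dots> \<le> (\<Sum>c<m. w c * (measure M E * exp (2 * l\<^sup>2 / real m)))"
  proof (rule sum_mono)
    fix c assume cm: "c \<in> {..<m}"
    show "w c * (\<integral>\<omega>. indicator E \<omega> * exp (yv c \<omega>) \<partial>M) \<le> w c * (measure M E * exp (2 * l\<^sup>2 / real m))"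
    proof (cases "Nc c = 0")
      case True then show ?thesis by (simp add: w_def)
    next
      case False
      have "(\<integral>\<omega>. indicator E \<omega> * exp (yv c \<omega>) \<partial>M) = (\<integral>\<omega>. indicator E \<omega> * exp (l / real (Nc c) * (\<Sum>q\<in>Mc m c. W q \<omega>)) \<partial>M)"
        using False by (simp add: yv_def V_def)
      also have "\<dots> \<le> measure M E * exp (2 * l\<^sup>2 / real m)"
        by (rule mgf_block) (use cm False in auto)
      finally show ?thesis using w0 by (intro mult_left_mono) auto
    qed
  qed
  also have "\<dots> = measure M E * exp (2 * l\<^sup>2 / real m)"
    using sumw by (simp add: sum_distrib_right[symmetric])
  finally show ?thesis .
qed

end


context setting
begin

lemma chernoff:
  assumes A: "{\<omega> \<in> E. P \<omega>} \<in> sets M" and a: "\<And>\<omega>. \<omega> \<in> E \<Longrightarrow> P \<omega> \<Longrightarrow> a \<le> l * (Ust \<omega> - tau0)"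
  shows "measure M {\<omega> \<in> E. P \<omega>} \<le> exp (- a) * (measure M E * exp (2 * l\<^sup>2 / real m))"
proof -
  define B0 where "B0 = 1 + \<bar>tau0\<bar>"
  have int_l: "integrable M (\<lambda>\<omega>. indicator E \<omega> * exp (l * (Ust \<omega> - tau0)))"
  proof (rule bint[where B="exp (\<bar>l\<bar> * B0)"])
    show "(\<lambda>\<omega>. indicator E \<omega> * exp (l * (Ust \<omega> - tau0))) \<in> borel_measurable M"
      using E_ind_meas Ust_meas by measurable
    show "\<bar>indicator E \<omega> * exp (l * (Ust \<omega> - tau0))\<bar> \<le> exp (\<bar>l\<bar> * B0)" for \<omega>
    proof -
      have "l * (Ust \<omega> - tau0) \<le> \<bar>l\<bar> * \<bar>Ust \<omega> - tau0\<bar>" by (metis abs_ge_self abs_mult)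
      also have "\<dots> \<le> \<bar>l\<bar> * B0" using Ust_bound[of \<omega>] by (intro mult_left_mono) (auto simp: B0_def)
      finally show ?thesis by (simp add: indicator_def)
    qed
  qed
  have "measure M {\<omega> \<in> E. P \<omega>} = (\<integral>\<omega>. indicator {\<omega> \<in> E. P \<omega>} \<omega> \<partial>M)"
    using A E_meas sets.sets_into_space by (simp add: Int_absorb2 E_def)
  also have "\<dots> \<le> (\<integral>\<omega>. exp (- a) * (indicator E \<omega> * exp (l * (Ust \<omega> - tau0))) \<partial>M)"
  proof (rule integral_mono)
    show "integrable M (indicator {\<omega> \<in> E. P \<omega>} :: _ \<Rightarrow> real)"
      using A by (intro integrable_real_indicator) (auto simp: less_top[symmetric])
    show "integrable M (\<lambda>\<omega>. exp (- a) * (indicator E \<omega> * exp (l * (Ust \<omega> - tau0))))"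
      using int_l by simp
    fix \<omega>
    show "indicator {\<omega> \<in> E. P \<omega>} \<omega> \<le> exp (- a) * (indicator E \<omega> * exp (l * (Ust \<omega> - tau0)))"
    proof (cases "\<omega> \<in> E \<and> P \<omega>")
      case True
      then have "0 \<le> l * (Ust \<omega> - tau0) - a" using a by auto
      then have "1 \<le> exp (l * (Ust \<omega> - tau0) - a)" by simp
      also have "\<dots> = exp (- a + l * (Ust \<omega> - tau0))" by simp
      also have "\<dots> = exp (- a) * exp (l * (Ust \<omega> - tau0))" by (rule exp_add)
      finally show ?thesis using True by simp
    next
      case False
      then show ?thesis by (auto simp: indicator_def)
    qed
  qed
  also have "\<dots> = exp (- a) * (\<integral>\<omega>. indicator E \<omega> * exp (l * (Ust \<omega> - tau0)) \<partial>M)"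
    by simp
  also have "\<dots> \<le> exp (- a) * (measure M E * exp (2 * l\<^sup>2 / real m))"
    by (intro mult_left_mono mgf) simp
  finally show ?thesis .
qed

lemma tail_sets: "{\<omega> \<in> E. P (Ust \<omega>)} \<in> sets M" if "Measurable.pred borel P"
proof -
  note [measurable] = that Ust_meas
  have "{\<omega> \<in> space M. P (Ust \<omega>)} \<in> sets M" by measurable
  then have "{\<omega> \<in> space M. P (Ust \<omega>)} \<inter> E \<in> sets M" using E_meas by auto
  moreover have "{\<omega> \<in> space M. P (Ust \<omega>)} \<inter> E = {\<omega> \<in> E. P (Ust \<omega>)}" by (auto simp: E_def)
  ultimately show ?thesis by simp
qed

lemma tail_up:
  assumes t: "t > 0"
  shows "measure M {\<omega> \<in> E. Ust \<omega> - tau0 > t} \<le> measure M E * exp (- real m * t\<^sup>2 / 8)"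
proof -
  define l where "l = real m * t / 4"
  have "measure M {\<omega> \<in> E. Ust \<omega> - tau0 > t} \<le> exp (- (l * t)) * (measure M E * exp (2 * l\<^sup>2 / real m))"
  proof (rule chernoff)
    show "{\<omega> \<in> E. Ust \<omega> - tau0 > t} \<in> sets M" using tail_sets[of "\<lambda>x. x - tau0 > t"] by measurable
    fix \<omega> assume "\<omega> \<in> E" "Ust \<omega> - tau0 > t"
    moreover have "l \<ge> 0" using t by (simp add: l_def)
    ultimately show "l * t \<le> l * (Ust \<omega> - tau0)" by (intro mult_left_mono) auto
  qed
  also have "exp (- (l * t)) * (measure M E * exp (2 * l\<^sup>2 / real m)) = measure M E * (exp (- (l * t)) * exp (2 * l\<^sup>2 / real m))"
    by (simp only: mult_ac)
  also have "exp (- (l * t)) * exp (2 * l\<^sup>2 / real m) = exp (- (l * t) + 2 * l\<^sup>2 / real m)"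
    by (rule exp_add[symmetric])
  also have "- (l * t) + 2 * l\<^sup>2 / real m = - real m * t\<^sup>2 / 8"
    using m_ge2 by (simp add: l_def power2_eq_square field_simps)
  finally show ?thesis .
qed

lemma tail_down:
  assumes t: "t > 0"
  shows "measure M {\<omega> \<in> E. Ust \<omega> - tau0 < - t} \<le> measure M E * exp (- real m * t\<^sup>2 / 8)"
proof -
  define l where "l = - (real m * t / 4)"
  have "measure M {\<omega> \<in> E. Ust \<omega> - tau0 < - t} \<le> exp (- (- l * t)) * (measure M E * exp (2 * l\<^sup>2 / real m))"
  proof (rule chernoff)
    show "{\<omega> \<in> E. Ust \<omega> - tau0 < - t} \<in> sets M" using tail_sets[of "\<lambda>x. x - tau0 < - t"] by measurable
    fix \<omega> assume "\<omega> \<in> E" "Ust \<omega> - tau0 < - t"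
    moreover have "- l \<ge> 0" using t by (simp add: l_def)
    ultimately have "(- l) * t \<le> (- l) * (- (Ust \<omega> - tau0))" by (intro mult_left_mono) auto
    moreover have "(- l) * (- (Ust \<omega> - tau0)) = l * (Ust \<omega> - tau0)" by algebra
    ultimately show "- l * t \<le> l * (Ust \<omega> - tau0)" by linarith
  qed
  also have "exp (- (- l * t)) * (measure M E * exp (2 * l\<^sup>2 / real m)) = measure M E * (exp (- (- l * t)) * exp (2 * l\<^sup>2 / real m))"
    by (simp only: mult_ac)
  also have "exp (- (- l * t)) * exp (2 * l\<^sup>2 / real m) = exp (l * t + 2 * l\<^sup>2 / real m)"
    by (subst exp_add[symmetric]) simp
  also have "l * t + 2 * l\<^sup>2 / real m = - real m * t\<^sup>2 / 8"
    using m_ge2 by (simp add: l_def power2_eq_square field_simps)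
  finally show ?thesis .
qed

lemma n_pos: "n > 0"
proof -
  obtain a b where "a \<in> S" using exists_pair by blast
  then show ?thesis using S_sub by (auto simp: I_def)
qed

lemma m_le_n: "m \<le> n"
proof -
  have "card S \<le> card {1..n}" using S_sub by (intro card_mono) (auto simp: I_def)
  then show ?thesis by (simp add: m_def)
qed

lemma part2:
  assumes eps: "\<epsilon> > 0"
  shows "\<P>(\<omega> in M. pi_hat n YS k \<omega> * \<bar>tau_hat n XSj XSl YS k \<omega> - tau0\<bar> > \<epsilon> \<bar> (\<forall>i\<in>{1..n}. YS i \<omega> = y i))
           \<le> 2 * exp (- real n * \<epsilon>\<^sup>2 / 8)"
proof -
  define t where "t = real n * \<epsilon> / real m"
  have mpos: "real m > 0" using m_ge2 by simp
  have npos: "real n > 0" using n_pos by simp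
  have t0: "t > 0" using mpos npos eps by (simp add: t_def)
  define Nset where "Nset = {\<omega> \<in> space M. pi_hat n YS k \<omega> * \<bar>tau_hat n XSj XSl YS k \<omega> - tau0\<bar> > \<epsilon> \<and> (\<forall>i\<in>{1..n}. YS i \<omega> = y i)}"
  define A1 where "A1 = {\<omega> \<in> E. Ust \<omega> - tau0 > t}"
  define A2 where "A2 = {\<omega> \<in> E. Ust \<omega> - tau0 < - t}"
  have A1s: "A1 \<in> sets M" unfolding A1_def using tail_sets[of "\<lambda>x. x - tau0 > t"] by measurable
  have A2s: "A2 \<in> sets M" unfolding A2_def using tail_sets[of "\<lambda>x. x - tau0 < - t"] by measurable
  have sub: "Nset \<subseteq> A1 \<union> A2"
  proof
    fix \<omega> assume w: "\<omega> \<in> Nset"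
    then have wE: "\<omega> \<in> E" by (simp add: Nset_def E_def)
    have "real m / real n * \<bar>Ust \<omega> - tau0\<bar> > \<epsilon>" using w on_E[OF wE] by (simp add: Nset_def)
    then have "\<epsilon> * real n < real m * \<bar>Ust \<omega> - tau0\<bar>" using npos by (simp add: field_simps)
    then have "t < \<bar>Ust \<omega> - tau0\<bar>" using mpos by (simp add: t_def field_simps)
    then show "\<omega> \<in> A1 \<union> A2" using wE by (auto simp: A1_def A2_def)
  qed
  have "measure M Nset \<le> measure M (A1 \<union> A2)"
    using sub A1s A2s by (intro finite_measure_mono) auto
  also have "\<dots> \<le> measure M A1 + measure M A2"
    using A1s A2s by (rule measure_Un_le)
  also have "\<dots> \<le> measure M E * exp (- real m * t\<^sup>2 / 8) + measure M E * exp (- real m * t\<^sup>2 / 8)"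
    unfolding A1_def A2_def using tail_up[OF t0] tail_down[OF t0] by (rule add_mono)
  also have "\<dots> \<le> measure M E * exp (- real n * \<epsilon>\<^sup>2 / 8) + measure M E * exp (- real n * \<epsilon>\<^sup>2 / 8)"
  proof -
    have mt: "real m * t\<^sup>2 = real n * (real n * \<epsilon>\<^sup>2) / real m"
      using mpos by (simp add: t_def power2_eq_square field_simps)
    have "real m * (real n * \<epsilon>\<^sup>2) \<le> real n * (real n * \<epsilon>\<^sup>2)"
      using m_le_n by (intro mult_right_mono) auto
    then have "real m * (real n * \<epsilon>\<^sup>2) / real m \<le> real n * (real n * \<epsilon>\<^sup>2) / real m"
      using mpos by (intro divide_right_mono) auto
    then have "real n * \<epsilon>\<^sup>2 \<le> real m * t\<^sup>2" unfolding mt using mpos by simp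
    then have "exp (- real m * t\<^sup>2 / 8) \<le> exp (- real n * \<epsilon>\<^sup>2 / 8)" by simp
    then show ?thesis by (intro add_mono mult_left_mono) auto
  qed
  finally have num: "measure M Nset \<le> 2 * exp (- real n * \<epsilon>\<^sup>2 / 8) * measure M E" by (simp add: mult_ac)
  have PE': "measure M E > 0" using PE by (simp add: E_def)
  have "\<P>(\<omega> in M. pi_hat n YS k \<omega> * \<bar>tau_hat n XSj XSl YS k \<omega> - tau0\<bar> > \<epsilon> \<bar> (\<forall>i\<in>{1..n}. YS i \<omega> = y i))
      = measure M Nset / measure M E"
    by (simp add: cond_prob_def Nset_def E_def)
  also have "\<dots> \<le> 2 * exp (- real n * \<epsilon>\<^sup>2 / 8)"
    using num PE' by (simp add: divide_le_eq)
  finally show ?thesis .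
qed

end


theorem lemma2:
  fixes M :: "'a measure" and n K k :: nat
    and Xj Xl :: "'a \<Rightarrow> real" and Y :: "'a \<Rightarrow> nat"
    and XSj XSl :: "nat \<Rightarrow> 'a \<Rightarrow> real" and YS :: "nat \<Rightarrow> 'a \<Rightarrow> nat"
  assumes "prob_space M"
    and "trip Xj Xl Y \<in> M \<rightarrow>\<^sub>M obs_space"
    and "\<forall>\<omega>\<in>space M. Y \<omega> \<in> {1..K}"
    and "\<forall>i\<in>{1..n}. trip (XSj i) (XSl i) (YS i) \<in> M \<rightarrow>\<^sub>M obs_space"
    and "\<forall>i\<in>{1..n}. distr M obs_space (trip (XSj i) (XSl i) (YS i)) = distr M obs_space (trip Xj Xl Y)"
    and "prob_space.indep_vars M (\<lambda>_. obs_space) (\<lambda>i. trip (XSj i) (XSl i) (YS i)) {1..n}"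
    and "k \<in> {1..K}"
  shows "\<forall>y :: nat \<Rightarrow> nat.
           let E = {\<omega> \<in> space M. \<forall>i\<in>{1..n}. YS i \<omega> = y i};
               nky = card {i \<in> {1..n}. y i = k};
               tau = cond_tau (distr M obs_space (trip Xj Xl Y)) k
           in measure M E > 0 \<and> nky \<ge> 2 \<longrightarrow>
              (integral\<^sup>L (uniform_measure M E) (\<lambda>\<omega>. pi_hat n YS k \<omega> * tau_hat n XSj XSl YS k \<omega>)
                 = real nky / real n * tau)
            \<and> (\<forall>\<epsilon>>0. \<P>(\<omega> in M. pi_hat n YS k \<omega> * \<bar>tau_hat n XSj XSl YS k \<omega> - tau\<bar> > \<epsilon>
                          \<bar> (\<forall>i\<in>{1..n}. YS i \<omega> = y i))
                       \<le> 2 * exp (- real n * \<epsilon>\<^sup>2 / 8))"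
proof (intro allI)
  fix y :: "nat \<Rightarrow> nat"
  interpret P: prob_space M by (rule assms(1))
  show "let E = {\<omega> \<in> space M. \<forall>i\<in>{1..n}. YS i \<omega> = y i};
               nky = card {i \<in> {1..n}. y i = k};
               tau = cond_tau (distr M obs_space (trip Xj Xl Y)) k
           in measure M E > 0 \<and> nky \<ge> 2 \<longrightarrow>
              (integral\<^sup>L (uniform_measure M E) (\<lambda>\<omega>. pi_hat n YS k \<omega> * tau_hat n XSj XSl YS k \<omega>)
                 = real nky / real n * tau)
            \<and> (\<forall>\<epsilon>>0. \<P>(\<omega> in M. pi_hat n YS k \<omega> * \<bar>tau_hat n XSj XSl YS k \<omega> - tau\<bar> > \<epsilon>
                          \<bar> (\<forall>i\<in>{1..n}. YS i \<omega> = y i))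
                       \<le> 2 * exp (- real n * \<epsilon>\<^sup>2 / 8))"
    unfolding Let_def
  proof (intro impI)
    assume h: "measure M {\<omega> \<in> space M. \<forall>i\<in>{1..n}. YS i \<omega> = y i} > 0 \<and> card {i \<in> {1..n}. y i = k} \<ge> 2"
    interpret st: setting M n k XSj XSl YS "distr M obs_space (trip Xj Xl Y)" y
    proof (rule setting.intro)
      show "prob_space M" by (rule assms(1))
      show "\<And>i. i \<in> {1..n} \<Longrightarrow> trip (XSj i) (XSl i) (YS i) \<in> M \<rightarrow>\<^sub>M obs_space" using assms(4) by auto
      show "\<And>i. i \<in> {1..n} \<Longrightarrow> distr M obs_space (trip (XSj i) (XSl i) (YS i)) = distr M obs_space (trip Xj Xl Y)"
        using assms(5) by auto
      show "prob_space.indep_vars M (\<lambda>_. obs_space) (\<lambda>i. trip (XSj i) (XSl i) (YS i)) {1..n}" by (rule assms(6))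
      show "prob_space (distr M obs_space (trip Xj Xl Y))" by (rule P.prob_space_distr[OF assms(2)])
      show "sets (distr M obs_space (trip Xj Xl Y)) = sets obs_space" by simp
      show "measure M {\<omega> \<in> space M. \<forall>i\<in>{1..n}. YS i \<omega> = y i} > 0" using h by simp
      show "card {i \<in> {1..n}. y i = k} \<ge> 2" using h by simp
    qed
    have tau: "cond_tau (distr M obs_space (trip Xj Xl Y)) k = st.tau0" by (rule st.cond_tau_eq)
    have E: "{\<omega> \<in> space M. \<forall>i\<in>{1..n}. YS i \<omega> = y i} = st.E" by (simp add: st.E_def)
    have nky: "card {i \<in> {1..n}. y i = k} = st.m" by (simp add: st.m_def st.S_def)
    show "(integral\<^sup>L (uniform_measure M {\<omega> \<in> space M. \<forall>i\<in>{1..n}. YS i \<omega> = y i}) (\<lambda>\<omega>. pi_hat n YS k \<omega> * tau_hat n XSj XSl YS k \<omega>)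
                 = real (card {i \<in> {1..n}. y i = k}) / real n * cond_tau (distr M obs_space (trip Xj Xl Y)) k)
            \<and> (\<forall>\<epsilon>>0. \<P>(\<omega> in M. pi_hat n YS k \<omega> * \<bar>tau_hat n XSj XSl YS k \<omega> - cond_tau (distr M obs_space (trip Xj Xl Y)) k\<bar> > \<epsilon>
                          \<bar> (\<forall>i\<in>{1..n}. YS i \<omega> = y i))
                       \<le> 2 * exp (- real n * \<epsilon>\<^sup>2 / 8))"
      unfolding tau E nky using st.part1 st.part2 by auto
  qed
qed


end
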